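(* Let $(\Gamma,\lambda)$ be a tree plan with at least one infinity-node, and let $D=\deg P(\Gamma;x)$ (so $D\ge1$). Then $\mathcal{K}(\Gamma)$ is a $D$-dimensional asymptotic class of $\mathcal{L}_\Gamma$-structures, and for no positive integer $n<D$ is $\mathcal{K}(\Gamma)$ an $n$-dimensional asymptotic class.
   Context: Tree plans: a tree plan is a pair $(\Gamma,\lambda)$ where $\Gamma\subseteq\omega^{<\omega}$ is a finite set of finite sequences containing the empty sequence $\langle\rangle$ and closed under initial segments, and $\lambda:\Gamma\to\{1,\infty\}$ with $\lambda(\langle\rangle)=1$; nodes with $\lambda=\infty$ are infinity-nodes. For a non-empty set $X$ (and a fixed symbol $\star\notin X$), $\Gamma(X)$ is the set of finite sequences $\langle(i_0,t_0),\dots,(i_n,t_n)\rangle$ (including the empty one) such that $\langle i_0,\dots,i_n\rangle\in\Gamma$ and for each $k\le n$: $t_k=\star$ if $\lambda(\langle i_0,\dots,i_k\rangle)=1$, and $t_k\in X$ if $\lambda(\langle i_0,\dots,i_k\rangle)=\infty$. It is a tree under the initial-segment order, viewed as a structure in the language $\mathcal{L}_t$ with $\le$, root constant $\varepsilon$ (the empty sequence), meet $\sqcap$ (longest common initial segment) and $\mathtt{pred}$ (delete last entry; $\mathtt{pred}(\varepsilon)=\varepsilon$). The map $\pi_X:\Gamma(X)\to\Gamma$ sends $\langle(i_0,t_0),\dots,(i_n,t_n)\rangle$ to $\langle i_0,\dots,i_n\rangle$. The language $\mathcal{L}_\Gamma$ is $\mathcal{L}_t$ plus unary predicates $P_\sigma$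 ($\sigma\in\Gamma$) with $P_\sigma=\pi_X^{-1}(\sigma)$. $\Gamma(n)=\Gamma(\{1,\dots,n\})$, and $\mathcal{K}(\Gamma)$ is the class of finite $\mathcal{L}_\Gamma$-structures isomorphic to $\Gamma(n)$ for some $n\ge1$. Polynomial: with $\Gamma_\sigma=\{\tau:\sigma^\frown\tau\in\Gamma\}$, $\lambda_\sigma(\langle\rangle)=1$, $\lambda_\sigma(\tau)=\lambda(\sigma^\frown\tau)$ otherwise, define $P(\{\langle\rangle\};x)=1$ and $P(\Gamma;x)=1+\sum_{i<n}f_i(x)P(\Gamma_{\sigma_i};x)$ where $\sigma_0,\dots,\sigma_{n-1}$ are the immediate successors of $\langle\rangle$ and $f_i(x)=1$ if $\lambda(\sigma_i)=1$, $f_i(x)=x$ otherwise. (Equivalently $D$ is the maximum over $\sigma\in\Gamma$ of the number of infinity-nodes that are initial segments of $\sigma$.) Asymptotic classes: for a positive integer $N$, a class $\mathcal{K}$ of finite $\mathcal{L}$-structures is an $N$-dimensional asymptotic class if for every $\mathcal{L}$-formula $\varphi(x,\bar y)$ with $|\bar y|=m$ there is a finite set of triples $(d_i,\mu_i,\theta_i(\bar y))$, $i<k$, with $d_i\in\{0,\frac1N,\dots,\frac{N-1}N,1\}$, $\mu_i\in[0,\infty)$ and $\mu_i>0$ unless $d_i=0$, and $\theta_i$ $\mathcal{L}$-formulas, such that: (i) every $A\in\mathcal{K}$ satisfies $\forall\bar y\bigvee_{i<k}\theta_i(\bar y)$ and $\forall\bar y\,(\theta_i(\bar y)\to\neg\theta_j(\bar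 y))$ for $i\ne j$; (ii) for each $i<k$ and each $\epsilon>0$ there is $M$ such that for all $A\in\mathcal{K}$ with $|A|\ge M$ and all $\bar b\in A^m$ with $A\models\theta_i(\bar b)$, $\big||\varphi(A,\bar b)|-\mu_i|A|^{d_i}\big|\le\epsilon|A|^{d_i}$. *)

theory Defs
  imports Complex_Main "HOL-Computational_Algebra.Polynomial"
begin

datatype label = One | Infty

text \<open>A tree plan: a finite set of finite sequences of naturals containing the empty
sequence and closed under initial segments, with a labelling into {1, infinity}
(values outside the tree are irrelevant), the root labelled 1.\<close>

definition tree_plan :: "nat list set \<Rightarrow> (nat list \<Rightarrow> label) \<Rightarrow> bool" where
  "tree_plan G lam \<longleftrightarrow> finite G \<and> [] \<in> G \<and>
     (\<forall>s\<in>G. \<forall>k. take k s \<in> G) \<and> lam [] = One"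

definition sub_plan :: "nat list set \<Rightarrow> nat list \<Rightarrow> nat list set" where
  "sub_plan G s = {t. s @ t \<in> G}"

definition sub_lab :: "(nat list \<Rightarrow> label) \<Rightarrow> nat list \<Rightarrow> nat list \<Rightarrow> label" where
  "sub_lab lam s t = (if t = [] then One else lam (s @ t))"

definition lab_factor :: "label \<Rightarrow> int poly" where
  "lab_factor l = (if l = One then 1 else [:0, 1:])"

text \<open>The recursion P(Gamma;x) = 1 + sum_i f_i(x) P(Gamma_{sigma_i};x), run with a fuel
parameter (any fuel at least the height of the tree gives the polynomial; once the tree is
just the root the sum is empty and the value is 1).\<close>

fun tpoly_aux :: "nat \<Rightarrow> nat list set \<Rightarrow> (nat list \<Rightarrow> label) \<Rightarrow> int poly" where
  "tpoly_aux 0 G lam = 1"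
| "tpoly_aux (Suc k) G lam =
     1 + (\<Sum>i\<in>{i. [i] \<in> G}. lab_factor (lam [i]) * tpoly_aux k (sub_plan G [i]) (sub_lab lam [i]))"

definition tpoly :: "nat list set \<Rightarrow> (nat list \<Rightarrow> label) \<Rightarrow> int poly" where
  "tpoly G lam = tpoly_aux (Max (length ` G)) G lam"

record 'a tstruct =
  carrier :: "'a set"
  le :: "'a \<Rightarrow> 'a \<Rightarrow> bool"
  root :: 'a
  meet :: "'a \<Rightarrow> 'a \<Rightarrow> 'a"
  pred :: "'a \<Rightarrow> 'a"
  Pr :: "nat list \<Rightarrow> 'a \<Rightarrow> bool"

fun lcp :: "'b list \<Rightarrow> 'b list \<Rightarrow> 'b list" where
  "lcp (x # xs) (y # ys) = (if x = y then x # lcp xs ys else [])"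
| "lcp _ _ = []"

text \<open>Gamma(X), with None playing the role of the symbol star.\<close>

definition Gamma_set :: "nat list set \<Rightarrow> (nat list \<Rightarrow> label) \<Rightarrow> nat set \<Rightarrow> (nat \<times> nat option) list set" where
  "Gamma_set G lam X = {s. map fst s \<in> G \<and>
     (\<forall>k < length s. (if lam (map fst (take (Suc k) s)) = Infty
                        then snd (s ! k) \<in> Some ` X else snd (s ! k) = None))}"

definition Gamma_struct :: "nat list set \<Rightarrow> (nat list \<Rightarrow> label) \<Rightarrow> nat set \<Rightarrow> (nat \<times> nat option) list tstruct" where
  "Gamma_struct G lam X = \<lparr> carrier = Gamma_set G lam X,
     le = (\<lambda>s t. \<exists>u. t = s @ u),
     root = [],
     meet = lcp,
     pred = butlast,
     Pr = (\<lambda>\<sigma> s. map fst s = \<sigma>) \<rparr>"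

text \<open>Isomorphism of L_Gamma-structures (only the predicates P_sigma with sigma in Gamma
belong to the language).\<close>

definition iso_struct :: "nat list set \<Rightarrow> 'a tstruct \<Rightarrow> 'b tstruct \<Rightarrow> bool" where
  "iso_struct G A B \<longleftrightarrow>
     root A \<in> carrier A \<and>
     (\<forall>a\<in>carrier A. pred A a \<in> carrier A) \<and>
     (\<forall>a\<in>carrier A. \<forall>b\<in>carrier A. meet A a b \<in> carrier A) \<and>
     (\<exists>h. bij_betw h (carrier A) (carrier B) \<and>
        h (root A) = root B \<and>
        (\<forall>a\<in>carrier A. h (pred A a) = pred B (h a)) \<and>
        (\<forall>a\<in>carrier A. \<forall>b\<in>carrier A. h (meet A a b) = meet B (h a) (h b)) \<and>
        (\<forall>a\<in>carrier A. \<forall>b\<in>carrier A. le A a b \<longleftrightarrow> le B (h a) (h b)) \<and>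
        (\<forall>\<sigma>\<in>G. \<forall>a\<in>carrier A. Pr A \<sigma> a \<longleftrightarrow> Pr B \<sigma> (h a)))"

text \<open>K(Gamma): finite L_Gamma-structures isomorphic to some Gamma(n), n >= 1.
The universe type is fixed to the (infinite) type of the standard models, which contains
an isomorphic copy of every finite structure.\<close>

definition K_class :: "nat list set \<Rightarrow> (nat list \<Rightarrow> label) \<Rightarrow> (nat \<times> nat option) list tstruct set" where
  "K_class G lam = {A. finite (carrier A) \<and>
     (\<exists>n\<ge>1. iso_struct G A (Gamma_struct G lam {1..n}))}"

datatype tm = Var nat | Root | Meet tm tm | PredT tm

datatype fm = FFalse | FEq tm tm | FLe tm tm | FP "nat list" tm
  | FNot fm | FAnd fm fm | FOr fm fm | FEx nat fm | FAll nat fm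

fun fv_tm :: "tm \<Rightarrow> nat set" where
  "fv_tm (Var v) = {v}"
| "fv_tm Root = {}"
| "fv_tm (Meet s t) = fv_tm s \<union> fv_tm t"
| "fv_tm (PredT t) = fv_tm t"

fun fv :: "fm \<Rightarrow> nat set" where
  "fv FFalse = {}"
| "fv (FEq s t) = fv_tm s \<union> fv_tm t"
| "fv (FLe s t) = fv_tm s \<union> fv_tm t"
| "fv (FP \<sigma> t) = fv_tm t"
| "fv (FNot p) = fv p"
| "fv (FAnd p q) = fv p \<union> fv q"
| "fv (FOr p q) = fv p \<union> fv q"
| "fv (FEx v p) = fv p - {v}"
| "fv (FAll v p) = fv p - {v}"

fun in_lang :: "nat list set \<Rightarrow> fm \<Rightarrow> bool" where
  "in_lang G (FP \<sigma> t) = (\<sigma> \<in> G)"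
| "in_lang G (FNot p) = in_lang G p"
| "in_lang G (FAnd p q) = (in_lang G p \<and> in_lang G q)"
| "in_lang G (FOr p q) = (in_lang G p \<and> in_lang G q)"
| "in_lang G (FEx v p) = in_lang G p"
| "in_lang G (FAll v p) = in_lang G p"
| "in_lang G _ = True"

fun eval_tm :: "'a tstruct \<Rightarrow> (nat \<Rightarrow> 'a) \<Rightarrow> tm \<Rightarrow> 'a" where
  "eval_tm A e (Var v) = e v"
| "eval_tm A e Root = root A"
| "eval_tm A e (Meet s t) = meet A (eval_tm A e s) (eval_tm A e t)"
| "eval_tm A e (PredT t) = pred A (eval_tm A e t)"

fun sat :: "'a tstruct \<Rightarrow> (nat \<Rightarrow> 'a) \<Rightarrow> fm \<Rightarrow> bool" where
  "sat A e FFalse = False"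
| "sat A e (FEq s t) = (eval_tm A e s = eval_tm A e t)"
| "sat A e (FLe s t) = le A (eval_tm A e s) (eval_tm A e t)"
| "sat A e (FP \<sigma> t) = Pr A \<sigma> (eval_tm A e t)"
| "sat A e (FNot p) = (\<not> sat A e p)"
| "sat A e (FAnd p q) = (sat A e p \<and> sat A e q)"
| "sat A e (FOr p q) = (sat A e p \<or> sat A e q)"
| "sat A e (FEx v p) = (\<exists>a\<in>carrier A. sat A (e(v := a)) p)"
| "sat A e (FAll v p) = (\<forall>a\<in>carrier A. sat A (e(v := a)) p)"

text \<open>Variable 0 is x, variables 1..m are y_1..y_m (given as a list b of length m).\<close>

definition env :: "'a tstruct \<Rightarrow> 'a \<Rightarrow> 'a list \<Rightarrow> nat \<Rightarrow> 'a" where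
  "env A a b = (\<lambda>k. if k = 0 then a else if k \<le> length b then b ! (k - 1) else root A)"

definition tuples :: "'a tstruct \<Rightarrow> nat \<Rightarrow> 'a list set" where
  "tuples A m = {b. length b = m \<and> set b \<subseteq> carrier A}"

definition def_set :: "'a tstruct \<Rightarrow> fm \<Rightarrow> 'a list \<Rightarrow> 'a set" where
  "def_set A \<phi> b = {a \<in> carrier A. sat A (env A a b) \<phi>}"

definition holds_y :: "'a tstruct \<Rightarrow> fm \<Rightarrow> 'a list \<Rightarrow> bool" where
  "holds_y A \<theta> b = sat A (env A (root A) b) \<theta>"

definition asymptotic_class :: "(fm \<Rightarrow> bool) \<Rightarrow> 'a tstruct set \<Rightarrow> nat \<Rightarrow> bool" where
  "asymptotic_class L K N \<longleftrightarrow> N > 0 \<and>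
    (\<forall>\<phi> m. L \<phi> \<and> fv \<phi> \<subseteq> {..m} \<longrightarrow>
      (\<exists>T :: (real \<times> real \<times> fm) list.
         (\<forall>(d, \<mu>, \<theta>) \<in> set T.
             (\<exists>j\<le>N. d = real j / real N) \<and> \<mu> \<ge> 0 \<and> (d \<noteq> 0 \<longrightarrow> \<mu> > 0) \<and>
             L \<theta> \<and> fv \<theta> \<subseteq> {1..m}) \<and>
         (\<forall>A\<in>K. \<forall>b\<in>tuples A m.
             (\<exists>i < length T. holds_y A (snd (snd (T ! i))) b) \<and>
             (\<forall>i < length T. \<forall>j < length T. i \<noteq> j \<longrightarrow>
                 \<not> (holds_y A (snd (snd (T ! i))) b \<and> holds_y A (snd (snd (T ! j))) b))) \<and>
         (\<forall>i < length T. \<forall>\<epsilon>::real. \<epsilon> > 0 \<longrightarrow>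
            (\<exists>M::nat. \<forall>A\<in>K. card (carrier A) \<ge> M \<longrightarrow>
               (\<forall>b\<in>tuples A m. holds_y A (snd (snd (T ! i))) b \<longrightarrow>
                  \<bar>real (card (def_set A \<phi> b)) - fst (snd (T ! i)) * real (card (carrier A)) powr fst (T ! i)\<bar>
                    \<le> \<epsilon> * real (card (carrier A)) powr fst (T ! i))))))"

end

theory Submission
  imports Defs "HOL-Library.Sublist"
begin

lemma le_prefix: "(\<lambda>s t. \<exists>u. t = s @ u) = prefix"
  by (auto simp: prefix_def fun_eq_iff)

lemma lcp_prefix_iff: "prefix w (lcp s t) \<longleftrightarrow> prefix w s \<and> prefix w t"
proof (induction s t arbitrary: w rule: lcp.induct)
  case (1 x xs y ys)
  then show ?case by (cases w) auto
qed (auto)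

lemma lcp_prefix1: "prefix (lcp s t) s" and lcp_prefix2: "prefix (lcp s t) t"
  using lcp_prefix_iff[of "lcp s t" s t] by auto

lemma prefix_antisym_all: "(\<And>w. prefix w a \<longleftrightarrow> prefix w b) \<Longrightarrow> a = b"
  by (meson prefix_order.antisym prefix_order.refl)

lemma prefix_same_len: "prefix a c \<Longrightarrow> prefix b c \<Longrightarrow> length a = length b \<Longrightarrow> a = b"
  by (metis prefix_length_prefix prefix_order.antisym order_refl)

definition ok :: "(nat list \<Rightarrow> label) \<Rightarrow> nat set \<Rightarrow> nat list \<Rightarrow> nat option \<Rightarrow> bool" where
  "ok lam X s t = (if lam s = Infty then t \<in> Some ` X else t = None)"

lemma Gamma_set_iff: "s \<in> Gamma_set G lam X \<longleftrightarrow> map fst s \<in> G \<and>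
   (\<forall>k < length s. ok lam X (map fst (take (Suc k) s)) (snd (s ! k)))"
  unfolding Gamma_set_def ok_def by auto

lemma tree_take: "tree_plan G lam \<Longrightarrow> s \<in> G \<Longrightarrow> take k s \<in> G"
  unfolding tree_plan_def by auto

lemma Gamma_take: assumes "tree_plan G lam" "s \<in> Gamma_set G lam X"
  shows "take k s \<in> Gamma_set G lam X"
  using assms unfolding Gamma_set_iff
  by (auto simp: take_map[symmetric] tree_take min_def)

lemma Gamma_prefix: assumes "tree_plan G lam" "s \<in> Gamma_set G lam X" "prefix w s"
  shows "w \<in> Gamma_set G lam X"
  using Gamma_take[OF assms(1,2), of "length w"] assms(3)
  by (metis append_eq_conv_conj prefix_def)

lemma Gamma_nil: "tree_plan G lam \<Longrightarrow> [] \<in> Gamma_set G lam X"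
  unfolding Gamma_set_iff tree_plan_def by auto

lemma Gamma_butlast: "tree_plan G lam \<Longrightarrow> s \<in> Gamma_set G lam X \<Longrightarrow> butlast s \<in> Gamma_set G lam X"
  using Gamma_prefix prefixeq_butlast by blast

lemma Gamma_lcp: "tree_plan G lam \<Longrightarrow> s \<in> Gamma_set G lam X \<Longrightarrow> lcp s t \<in> Gamma_set G lam X"
  using Gamma_prefix lcp_prefix1 by blast

lemma Gamma_snoc: assumes "u \<in> Gamma_set G lam X" "map fst u @ [i] \<in> G"
  "ok lam X (map fst u @ [i]) t"
  shows "u @ [(i,t)] \<in> Gamma_set G lam X"
  using assms unfolding Gamma_set_iff
  by (auto simp: nth_append less_Suc_eq take_Suc_conv_app_nth)

lemma Gamma_swap_app: assumes "p @ w \<in> Gamma_set G lam X" "q \<in> Gamma_set G lam X"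
  "map fst q = map fst p"
  shows "q @ w \<in> Gamma_set G lam X"
proof -
  have lq: "length q = length p" using assms(3) by (metis length_map)
  show ?thesis
    using assms unfolding Gamma_set_iff
    by (auto simp: nth_append lq)
qed

definition closed_st :: "'a tstruct \<Rightarrow> bool" where
  "closed_st A \<longleftrightarrow> root A \<in> carrier A \<and>
     (\<forall>a\<in>carrier A. pred A a \<in> carrier A) \<and>
     (\<forall>a\<in>carrier A. \<forall>b\<in>carrier A. meet A a b \<in> carrier A)"

definition hom_st :: "nat list set \<Rightarrow> 'a tstruct \<Rightarrow> 'b tstruct \<Rightarrow> ('a \<Rightarrow> 'b) \<Rightarrow> bool" where
  "hom_st G A B h \<longleftrightarrow> bij_betw h (carrier A) (carrier B) \<and>
        h (root A) = root B \<and>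
        (\<forall>a\<in>carrier A. h (pred A a) = pred B (h a)) \<and>
        (\<forall>a\<in>carrier A. \<forall>b\<in>carrier A. h (meet A a b) = meet B (h a) (h b)) \<and>
        (\<forall>a\<in>carrier A. \<forall>b\<in>carrier A. le A a b \<longleftrightarrow> le B (h a) (h b)) \<and>
        (\<forall>\<sigma>\<in>G. \<forall>a\<in>carrier A. Pr A \<sigma> a \<longleftrightarrow> Pr B \<sigma> (h a))"

lemma iso_struct_alt: "iso_struct G A B \<longleftrightarrow> closed_st A \<and> (\<exists>h. hom_st G A B h)"
  unfolding iso_struct_def closed_st_def hom_st_def by blast

lemma eval_tm_hom:
  assumes "closed_st A" "hom_st G A B h" "\<forall>v. e v \<in> carrier A"
  shows "eval_tm A e t \<in> carrier A \<and> h (eval_tm A e t) = eval_tm B (h \<circ> e) t"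
  using assms unfolding closed_st_def hom_st_def
  by (induction t) auto

lemma sat_hom:
  assumes "closed_st A" "hom_st G A B h" "in_lang G \<phi>" "\<forall>v. e v \<in> carrier A"
  shows "sat A e \<phi> \<longleftrightarrow> sat B (h \<circ> e) \<phi>"
  using assms(3,4)
proof (induction \<phi> arbitrary: e)
  case (FEq s t)
  have inj: "inj_on h (carrier A)" using assms(2) unfolding hom_st_def bij_betw_def by auto
  have a: "eval_tm A e s \<in> carrier A" "eval_tm A e t \<in> carrier A"
    and b: "h (eval_tm A e s) = eval_tm B (h \<circ> e) s" "h (eval_tm A e t) = eval_tm B (h \<circ> e) t"
    using eval_tm_hom[OF assms(1,2) FEq(2)] by auto
  show ?case using inj_on_eq_iff[OF inj a] b by (simp add: comp_def)
next
  case (FLe s t)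
  then show ?case using eval_tm_hom[OF assms(1,2), of e] assms(2)
    unfolding hom_st_def by (auto simp: comp_def)
next
  case (FP \<sigma> t)
  then show ?case using eval_tm_hom[OF assms(1,2), of e] assms(2)
    unfolding hom_st_def by (auto simp: comp_def)
next
  case (FEx v p)
  have bij: "bij_betw h (carrier A) (carrier B)" using assms(2) unfolding hom_st_def by auto
  have "sat A e (FEx v p) \<longleftrightarrow> (\<exists>a\<in>carrier A. sat B (h \<circ> e(v := a)) p)"
    using FEx by (auto simp: comp_def)
  also have "\<dots> \<longleftrightarrow> (\<exists>a\<in>carrier A. sat B ((h \<circ> e)(v := h a)) p)"
    by (simp add: fun_upd_comp)
  also have "\<dots> \<longleftrightarrow> (\<exists>b\<in>carrier B. sat B ((h \<circ> e)(v := b)) p)"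
    using bij by (metis bij_betw_apply bij_betw_inv_into_right bij_betw_inv_into bij_betw_def)
  finally show ?case by (simp add: comp_def)
next
  case (FAll v p)
  have bij: "bij_betw h (carrier A) (carrier B)" using assms(2) unfolding hom_st_def by auto
  have "sat A e (FAll v p) \<longleftrightarrow> (\<forall>a\<in>carrier A. sat B (h \<circ> e(v := a)) p)"
    using FAll by (auto simp: comp_def)
  also have "\<dots> \<longleftrightarrow> (\<forall>a\<in>carrier A. sat B ((h \<circ> e)(v := h a)) p)"
    by (simp add: fun_upd_comp)
  also have "\<dots> \<longleftrightarrow> (\<forall>b\<in>carrier B. sat B ((h \<circ> e)(v := b)) p)"
    using bij by (metis bij_betw_apply bij_betw_inv_into_right bij_betw_inv_into bij_betw_def)
  finally show ?case by (simp add: comp_def)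
qed auto

lemma env_comp: "h (root A) = root B \<Longrightarrow> h \<circ> env A a b = env B (h a) (map h b)"
  by (auto simp: env_def fun_eq_iff)

lemma env_in: "root A \<in> carrier A \<Longrightarrow> a \<in> carrier A \<Longrightarrow> set b \<subseteq> carrier A \<Longrightarrow> \<forall>v. env A a b v \<in> carrier A"
  by (auto simp: env_def)

lemma hom_comp: "hom_st G A B f \<Longrightarrow> hom_st G B C g \<Longrightarrow> closed_st A \<Longrightarrow> hom_st G A C (g \<circ> f)"
proof -
  assume f: "hom_st G A B f" and g: "hom_st G B C g" and c: "closed_st A"
  have fa: "\<forall>a\<in>carrier A. f a \<in> carrier B" using f unfolding hom_st_def by (meson bij_betw_apply)
  show ?thesis using f g c fa unfolding hom_st_def closed_st_def
    apply (intro conjI)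
    apply (meson bij_betw_trans)
    by auto
qed

lemma hom_id: "hom_st G A A id"
  unfolding hom_st_def by auto

definition swp :: "'a list \<Rightarrow> 'a list \<Rightarrow> 'a list \<Rightarrow> 'a list" where
  "swp p q z = (if prefix p z then q @ drop (length p) z
                else if prefix q z then p @ drop (length q) z else z)"

lemma pre_app: "prefix (p @ x) b \<Longrightarrow> prefix p b"
  unfolding prefix_def by auto

lemma pre_neq: "length p = length q \<Longrightarrow> p \<noteq> q \<Longrightarrow> \<not> prefix (p @ x) (q @ y)"
  by (metis pre_app prefix_length_prefix prefix_order.antisym prefix_order.refl append_eq_conv_conj prefix_def take_all_iff order_refl)

lemma pre_neq2: "length p = length q \<Longrightarrow> p \<noteq> q \<Longrightarrow> \<not> prefix p (q @ y)"
  using pre_neq[of p q "[]" y] by simp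

lemma swp_same: "swp p p z = z"
  unfolding swp_def by (auto elim!: prefixE)

locale sib =
  fixes p q :: "'a list"
  assumes len: "length p = length q" and bl: "butlast p = butlast q" and ne: "p \<noteq> []"
begin

lemma not_both: "p \<noteq> q \<Longrightarrow> prefix p z \<Longrightarrow> prefix q z \<Longrightarrow> False"
  using len prefix_same_len by blast

lemma swp_len: "length (swp p q z) = length z"
  unfolding swp_def using len by (auto dest: prefix_length_le)

lemma swp_invol: "swp p q (swp p q z) = z"
proof (cases "p = q")
  case True then show ?thesis by (auto simp: swp_def prefix_def)
next
  case False
  then show ?thesis unfolding swp_def using len not_both[OF False]
    by (auto simp: prefix_def)
qed

lemma outside: assumes "\<not> prefix p a" shows "prefix a (p @ w) \<longleftrightarrow> prefix a (butlast p)"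
proof -
  have pp: "p = butlast p @ [last p]" using ne by simp
  show ?thesis
  proof
    assume "prefix a (p @ w)"
    then have "prefix a p" using assms by (auto simp: prefix_append)
    then show "prefix a (butlast p)" using assms pp by (metis prefix_order.refl prefix_snoc)
  next
    assume "prefix a (butlast p)" then show "prefix a (p @ w)"
      using pp by (metis prefix_append prefix_order.trans prefixeq_butlast)
  qed
qed

lemma outside_q: assumes "\<not> prefix q a" shows "prefix a (q @ w) \<longleftrightarrow> prefix a (butlast p)"
  using sib.outside[of q p] sib_axioms assms len bl ne unfolding sib_def
  by (metis length_0_conv)

lemma swp_prefix: "prefix a b \<longleftrightarrow> prefix (swp p q a) (swp p q b)"
proof (cases "p = q")
  case True show ?thesis unfolding True swp_same by (rule refl)
next
  case False
  note nb = not_both[OF False]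
  show ?thesis
  proof (cases "prefix p a")
    case pa: True
    then obtain a' where a: "a = p @ a'" by (auto simp: prefix_def)
    show ?thesis
    proof (cases "prefix p b")
      case True
      then obtain b' where b: "b = p @ b'" by (auto simp: prefix_def)
      show ?thesis using a b len by (simp add: swp_def)
    next
      case pb: False
      then show ?thesis
      proof (cases "prefix q b")
        case True
        then obtain b' where b: "b = q @ b'" by (auto simp: prefix_def)
        show ?thesis using a b len nb pre_neq[OF len False] pre_neq[OF len[symmetric]] pre_neq2[OF len False] pre_neq2[OF len[symmetric]] False
          by (auto simp: swp_def)
      next
        case False
        have "\<not> prefix a b" using a pb pre_app by blast
        moreover have "\<not> prefix (q @ a') b" using False pre_app by blast
        ultimately show ?thesis using a False pb len nb by (auto simp: swp_def)
      qed
    qed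
  next
    case npa: False
    show ?thesis
    proof (cases "prefix q a")
      case pa: True
      then obtain a' where a: "a = q @ a'" by (auto simp: prefix_def)
      show ?thesis
      proof (cases "prefix q b")
        case True
        then obtain b' where b: "b = q @ b'" by (auto simp: prefix_def)
        show ?thesis using a b len npa nb False pre_neq2[OF len False] by (auto simp: swp_def)
      next
        case pb: False
        then show ?thesis
        proof (cases "prefix p b")
          case True
          then obtain b' where b: "b = p @ b'" by (auto simp: prefix_def)
          show ?thesis using a b len nb npa pre_neq[OF len False] pre_neq[OF len[symmetric]] pre_neq2[OF len False] pre_neq2[OF len[symmetric]] False
            by (auto simp: swp_def)
        next
          case False
          have "\<not> prefix a b" using a pb pre_app by blast
          moreover have "\<not> prefix (p @ a') b" using False pre_app by blast
          ultimately show ?thesis using a False pb len nb npa by (auto simp: swp_def)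
        qed
      qed
    next
      case nqa: False
      show ?thesis
      proof (cases "prefix p b")
        case True
        then obtain b' where b: "b = p @ b'" by (auto simp: prefix_def)
        have "prefix a b \<longleftrightarrow> prefix a (butlast p)" using b outside[OF npa] by simp
        moreover have "prefix (swp p q a) (swp p q b) \<longleftrightarrow> prefix a (butlast p)"
          using b outside_q[OF nqa] npa nqa len by (simp add: swp_def)
        ultimately show ?thesis by simp
      next
        case npb: False
        show ?thesis
        proof (cases "prefix q b")
          case True
          then obtain b' where b: "b = q @ b'" by (auto simp: prefix_def)
          have "prefix a b \<longleftrightarrow> prefix a (butlast p)" using b outside_q[OF nqa] by simp
          moreover have "prefix (swp p q a) (swp p q b) \<longleftrightarrow> prefix a (butlast p)"
            using b outside[OF npa] outside_q[OF nqa] npa nqa len nb False pre_neq2[OF len False] by (simp add: swp_def)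
          ultimately show ?thesis by simp
        next
          case False
          then show ?thesis using npa nqa npb by (simp add: swp_def)
        qed
      qed
    qed
  qed
qed

lemma swp_lcp: "swp p q (lcp s t) = lcp (swp p q s) (swp p q t)"
proof (rule prefix_antisym_all)
  fix w
  have "prefix w (swp p q (lcp s t)) \<longleftrightarrow> prefix (swp p q w) (lcp s t)"
    using swp_prefix[of "swp p q w" "lcp s t"] swp_invol by simp
  also have "\<dots> \<longleftrightarrow> prefix (swp p q w) s \<and> prefix (swp p q w) t" by (rule lcp_prefix_iff)
  also have "\<dots> \<longleftrightarrow> prefix w (swp p q s) \<and> prefix w (swp p q t)"
    using swp_prefix[of "swp p q w"] swp_invol by simp
  also have "\<dots> \<longleftrightarrow> prefix w (lcp (swp p q s) (swp p q t))" by (rule lcp_prefix_iff[symmetric])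
  finally show "prefix w (swp p q (lcp s t)) \<longleftrightarrow> prefix w (lcp (swp p q s) (swp p q t))" .
qed

lemma swp_nil: "swp p q [] = []"
  using ne len by (auto simp: swp_def)

lemma swp_butlast: "swp p q (butlast z) = butlast (swp p q z)"
proof -
  have "prefix (swp p q (butlast z)) (swp p q z)" using swp_prefix prefixeq_butlast by blast
  moreover have "prefix (butlast (swp p q z)) (swp p q z)" by (rule prefixeq_butlast)
  moreover have "length (swp p q (butlast z)) = length (butlast (swp p q z))"
    using swp_len by simp
  ultimately show ?thesis using prefix_same_len by blast
qed

end

lemma swp_fst: "length p = length q \<Longrightarrow> map fst p = map fst q \<Longrightarrow> map fst (swp p q z) = map fst z"
proof -
  assume l: "length p = length q" and m: "map fst p = map fst q"
  have "map fst (q @ drop (length p) z) = map fst z" if "prefix p z"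
    using that m l by (auto simp: prefix_def)
  moreover have "map fst (p @ drop (length q) z) = map fst z" if "prefix q z"
    using that m l by (auto simp: prefix_def)
  ultimately show ?thesis unfolding swp_def by auto
qed

abbreviation GS where "GS G lam X \<equiv> Gamma_struct G lam X"

lemma GS_simps: "carrier (GS G lam X) = Gamma_set G lam X" "root (GS G lam X) = []"
  "meet (GS G lam X) = lcp" "pred (GS G lam X) = butlast" "le (GS G lam X) = prefix"
  "Pr (GS G lam X) = (\<lambda>\<sigma> s. map fst s = \<sigma>)"
  by (auto simp: Gamma_struct_def le_prefix)

lemma GS_closed: "tree_plan G lam \<Longrightarrow> closed_st (GS G lam X)"
  unfolding closed_st_def GS_simps using Gamma_nil Gamma_butlast Gamma_lcp by blast

lemma swp_maps: assumes "tree_plan G lam" "p \<in> Gamma_set G lam X" "q \<in> Gamma_set G lam X"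
  "map fst p = map fst q" "z \<in> Gamma_set G lam X"
  shows "swp p q z \<in> Gamma_set G lam X"
proof -
  have l: "length p = length q" using assms(4) by (metis length_map)
  have "q @ drop (length p) z \<in> Gamma_set G lam X" if "prefix p z"
    using that assms Gamma_swap_app[of p "drop (length p) z" G lam X q] by (auto simp: prefix_def)
  moreover have "p @ drop (length q) z \<in> Gamma_set G lam X" if "prefix q z"
    using that assms Gamma_swap_app[of q "drop (length q) z" G lam X p] by (auto simp: prefix_def)
  ultimately show ?thesis using assms(5) unfolding swp_def by auto
qed

lemma swp_hom: assumes t: "tree_plan G lam" and pq: "p \<in> Gamma_set G lam X" "q \<in> Gamma_set G lam X"
  and s: "sib p q" and f: "map fst p = map fst q"
  shows "hom_st G (GS G lam X) (GS G lam X) (swp p q)"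
proof -
  have l: "length p = length q" using f by (metis length_map)
  have bij: "bij_betw (swp p q) (Gamma_set G lam X) (Gamma_set G lam X)"
    by (rule bij_betw_byWitness[where f'="swp p q"])
       (use swp_maps[OF t pq f] sib.swp_invol[OF s] in auto)
  show ?thesis unfolding hom_st_def GS_simps
    using bij sib.swp_nil[OF s] sib.swp_butlast[OF s] sib.swp_lcp[OF s] sib.swp_prefix[OF s]
      swp_fst[OF l f] by auto
qed

lemma orbit:
  assumes t: "tree_plan G lam"
  shows "x \<in> Gamma_set G lam X \<Longrightarrow> x' \<in> Gamma_set G lam X \<Longrightarrow> map fst x = map fst x' \<Longrightarrow>
    l \<le> length x \<Longrightarrow> take l x = take l x' \<Longrightarrow>
    \<exists>f. hom_st G (GS G lam X) (GS G lam X) f \<and> f x = x' \<and>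
      (\<forall>z. \<not> prefix (take (Suc l) x) z \<and> \<not> prefix (take (Suc l) x') z \<longrightarrow> f z = z)"
proof (induction "length x - l" arbitrary: x l)
  case 0
  then have "length x' = length x" by (metis length_map)
  then have "x = x'" using 0 by (metis diff_is_0_eq le_antisym take_all)
  then show ?case using hom_id by (metis id_apply)
next
  case (Suc k)
  have lx: "length x' = length x" using Suc.prems by (metis length_map)
  have lt: "l < length x" using Suc.hyps by auto
  define p where "p = take (Suc l) x"
  define q where "q = take (Suc l) x'"
  have s: "sib p q" unfolding sib_def p_def q_def using lt lx Suc.prems
    by (auto simp: butlast_take)
  have f: "map fst p = map fst q" unfolding p_def q_def using Suc.prems by (metis take_map)
  have pG: "p \<in> Gamma_set G lam X" "q \<in> Gamma_set G lam X"
    unfolding p_def q_def using Gamma_take[OF t] Suc.prems by auto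
  have hg: "hom_st G (GS G lam X) (GS G lam X) (swp p q)" by (rule swp_hom[OF t pG s f])
  define x1 where "x1 = swp p q x"
  have ppx: "prefix p x" unfolding p_def by (simp add: take_is_prefix)
  have x1: "x1 = q @ drop (Suc l) x" unfolding x1_def swp_def using ppx lt by (simp add: p_def)
  have x1G: "x1 \<in> Gamma_set G lam X" unfolding x1_def using swp_maps[OF t pG f Suc.prems(1)] .
  have lq: "length q = Suc l" unfolding q_def using lt lx by simp
  have tx1: "take (Suc l) x1 = take (Suc l) x'" using x1 lq q_def by simp
  have fx1: "map fst x1 = map fst x'"
    unfolding x1_def using swp_fst[OF _ f] Suc.prems(3) s sib.len by metis
  have lx1: "length x1 = length x" using x1 lq lt by simp
  obtain f' where f': "hom_st G (GS G lam X) (GS G lam X) f'" "f' x1 = x'"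
    "\<forall>z. \<not> prefix (take (Suc (Suc l)) x1) z \<and> \<not> prefix (take (Suc (Suc l)) x') z \<longrightarrow> f' z = z"
  proof -
    have "k = length x1 - Suc l" using Suc.hyps(2) lx1 by simp
    moreover have "Suc l \<le> length x1" using lt lx1 by simp
    ultimately show ?thesis using Suc.hyps(1)[of x1 "Suc l"] x1G Suc.prems(2) fx1 tx1 that by blast
  qed
  have qa: "prefix q (take (Suc (Suc l)) x1)" "prefix q (take (Suc (Suc l)) x')"
  proof -
    have "take (Suc l) (take (Suc (Suc l)) x1) = q" "take (Suc l) (take (Suc (Suc l)) x') = q"
      using tx1 q_def by (simp_all add: min_def)
    then show "prefix q (take (Suc (Suc l)) x1)" "prefix q (take (Suc (Suc l)) x')"
      by (metis take_is_prefix)+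
  qed
  show ?case
  proof (intro exI conjI allI impI)
    show "hom_st G (GS G lam X) (GS G lam X) (f' \<circ> swp p q)"
      using hom_comp[OF hg f'(1) GS_closed[OF t]] .
    show "(f' \<circ> swp p q) x = x'" using f'(2) x1_def by simp
    fix z assume z: "\<not> prefix (take (Suc l) x) z \<and> \<not> prefix (take (Suc l) x') z"
    then have "swp p q z = z" unfolding swp_def p_def q_def by auto
    moreover have "f' z = z" using f'(3) z qa unfolding q_def
      by (meson prefix_order.trans)
    ultimately show "(f' \<circ> swp p q) z = z" by simp
  qed
qed

definition infc_from :: "(nat list \<Rightarrow> label) \<Rightarrow> nat \<Rightarrow> nat list \<Rightarrow> nat" where
  "infc_from lam l \<sigma> = card {k. l < k \<and> k \<le> length \<sigma> \<and> lam (take k \<sigma>) = Infty}"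

lemma infc_from_snoc: assumes "l \<le> length \<sigma>"
  shows "infc_from lam l (\<sigma> @ [i]) = infc_from lam l \<sigma> + (if lam (\<sigma> @ [i]) = Infty then 1 else 0)"
proof -
  have e: "{k. l < k \<and> k \<le> length (\<sigma>@[i]) \<and> lam (take k (\<sigma>@[i])) = Infty} =
    {k. l < k \<and> k \<le> length \<sigma> \<and> lam (take k \<sigma>) = Infty} \<union>
    (if lam (\<sigma> @ [i]) = Infty then {Suc (length \<sigma>)} else {})"
    using assms by (auto simp: le_Suc_eq)
  have f: "finite {k. l < k \<and> k \<le> length \<sigma> \<and> lam (take k \<sigma>) = Infty}" by simp
  show ?thesis unfolding infc_from_def e using f by (auto simp: card_insert_if)
qed

lemma infc_from_self: "infc_from lam (length \<sigma>) \<sigma> = 0"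
  unfolding infc_from_def by auto

lemma infc_from_step: assumes "l < length \<sigma>"
  shows "infc_from lam l \<sigma> = (if lam (take (Suc l) \<sigma>) = Infty then 1 else 0) + infc_from lam (Suc l) \<sigma>"
proof -
  have e: "{k. l < k \<and> k \<le> length \<sigma> \<and> lam (take k \<sigma>) = Infty} =
    {k. Suc l < k \<and> k \<le> length \<sigma> \<and> lam (take k \<sigma>) = Infty} \<union>
    (if lam (take (Suc l) \<sigma>) = Infty then {Suc l} else {})"
    using assms by (auto simp: Suc_le_eq) (metis Suc_lessI)+
  show ?thesis unfolding infc_from_def e by (auto simp: card_insert_if)
qed

lemma infc_from_le: "infc_from lam l \<sigma> \<le> infc_from lam 0 \<sigma>"
  unfolding infc_from_def by (rule card_mono) auto

definition Sset :: "nat list set \<Rightarrow> (nat list \<Rightarrow> label) \<Rightarrow> nat set \<Rightarrow> nat list \<Rightarrow> (nat \<times> nat option) list \<Rightarrow> (nat \<times> nat option) list set" where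
  "Sset G lam X \<sigma> u = {x \<in> Gamma_set G lam X. map fst x = \<sigma> \<and> prefix u x}"

lemma ok_card: "finite X \<Longrightarrow> finite {t. ok lam X s t} \<and> card {t. ok lam X s t} = (if lam s = Infty then card X else 1)"
proof -
  assume X: "finite X"
  show ?thesis
  proof (cases "lam s = Infty")
    case True
    then have "{t. ok lam X s t} = Some ` X" unfolding ok_def by auto
    then show ?thesis using X True by (simp add: card_image)
  next
    case False
    then have "{t. ok lam X s t} = {None}" unfolding ok_def by auto
    then show ?thesis using False by simp
  qed
qed

lemma prefix_butlast_ne: "prefix u x \<Longrightarrow> length u < length x \<Longrightarrow> prefix u (butlast x)"
  by (metis prefix_order.eq_iff prefix_length_le prefix_snoc snoc_eq_iff_butlast length_greater_0_conv
      less_le_not_le list.size(3) not_less_zero)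

lemma Sset_count:
  assumes t: "tree_plan G lam" and X: "finite X" and u: "u \<in> Gamma_set G lam X"
  shows "\<sigma> \<in> G \<Longrightarrow> prefix (map fst u) \<sigma> \<Longrightarrow>
    finite (Sset G lam X \<sigma> u) \<and> card (Sset G lam X \<sigma> u) = card X ^ infc_from lam (length u) \<sigma>"
proof (induction \<sigma> rule: rev_induct)
  case Nil
  then have "u = []" by simp
  then have "Sset G lam X [] u = {[]}" unfolding Sset_def using Gamma_nil[OF t] by auto
  moreover have "infc_from lam 0 [] = 0" unfolding infc_from_def by auto
  ultimately show ?case using \<open>u = []\<close> by simp
next
  case (snoc i \<sigma>)
  show ?case
  proof (cases "map fst u = \<sigma> @ [i]")
    case True
    have "Sset G lam X (\<sigma> @ [i]) u = {u}" unfolding Sset_def using True u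
      by (auto simp: prefix_def)
    moreover have "length u = length (\<sigma> @ [i])" using True by (metis length_map)
    ultimately show ?thesis using infc_from_self[of lam "\<sigma> @ [i]"] by simp
  next
    case False
    have pu: "prefix (map fst u) \<sigma>" using snoc.prems(2) False by (simp add: prefix_snoc)
    have sG: "\<sigma> \<in> G" using tree_take[OF t snoc.prems(1), of "length \<sigma>"] by simp
    note IH = snoc.IH[OF sG pu]
    define T where "T = {t. ok lam X (\<sigma> @ [i]) t}"
    have lu: "length u \<le> length \<sigma>" using pu by (metis length_map prefix_length_le)
    have eq: "Sset G lam X (\<sigma> @ [i]) u = (\<lambda>(z,t). z @ [(i,t)]) ` (Sset G lam X \<sigma> u \<times> T)"
    proof (intro equalityI subsetI)
      fix x assume x: "x \<in> Sset G lam X (\<sigma> @ [i]) u"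
      then have xG: "x \<in> Gamma_set G lam X" and fx: "map fst x = \<sigma> @ [i]" and ux: "prefix u x"
        unfolding Sset_def by auto
      have lx: "length x = Suc (length \<sigma>)" using fx by (metis length_append_singleton length_map)
      then obtain z a where za: "x = z @ [a]" by (metis length_Suc_conv_rev)
      have fz: "map fst z = \<sigma>" "fst a = i" using fx za by auto
      have zG: "z \<in> Gamma_set G lam X" using Gamma_butlast[OF t xG] za by simp
      have uz: "prefix u z" using prefix_butlast_ne[OF ux] lu lx za by simp
      have "ok lam X (map fst (take (Suc (length \<sigma>)) x)) (snd (x ! length \<sigma>))"
        using xG lx unfolding Gamma_set_iff by auto
      then have "snd a \<in> T" unfolding T_def using za fx fz lx by (simp add: nth_append)
      then show "x \<in> (\<lambda>(z,t). z @ [(i,t)]) ` (Sset G lam X \<sigma> u \<times> T)"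
        using za zG fz uz unfolding Sset_def
        by (auto intro!: image_eqI[where x="(z, snd a)"] simp: prod_eq_iff)
    next
      fix x assume "x \<in> (\<lambda>(z,t). z @ [(i,t)]) ` (Sset G lam X \<sigma> u \<times> T)"
      then obtain z t where x: "x = z @ [(i,t)]" and z: "z \<in> Sset G lam X \<sigma> u" and tT: "t \<in> T" by auto
      have "z @ [(i,t)] \<in> Gamma_set G lam X"
        using z tT snoc.prems(1) unfolding Sset_def T_def by (auto intro!: Gamma_snoc)
      then show "x \<in> Sset G lam X (\<sigma> @ [i]) u" using x z unfolding Sset_def
        by (auto simp: prefix_def)
    qed
    have inj: "inj_on (\<lambda>(z,t). z @ [(i,t)]) (Sset G lam X \<sigma> u \<times> T)"
      by (auto simp: inj_on_def)
    have Tc: "finite T" "card T = (if lam (\<sigma> @ [i]) = Infty then card X else 1)"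
      using ok_card[OF X] unfolding T_def by auto
    have "card (Sset G lam X (\<sigma> @ [i]) u) = card (Sset G lam X \<sigma> u) * card T"
      unfolding eq using card_image[OF inj] by (simp add: card_cartesian_product)
    then show ?thesis using eq IH Tc infc_from_snoc[OF lu, of lam i] by auto
  qed
qed

lemma Gamma_finite_card:
  assumes t: "tree_plan G lam" and X: "finite X"
  shows "finite (Gamma_set G lam X) \<and> card (Gamma_set G lam X) = (\<Sum>\<sigma>\<in>G. card X ^ infc_from lam 0 \<sigma>)"
proof -
  have e: "Gamma_set G lam X = (\<Union>\<sigma>\<in>G. Sset G lam X \<sigma> [])"
    unfolding Sset_def by (auto simp: Gamma_set_iff)
  have fG: "finite G" using t unfolding tree_plan_def by auto
  have each: "\<And>\<sigma>. \<sigma> \<in> G \<Longrightarrow> finite (Sset G lam X \<sigma> []) \<and> card (Sset G lam X \<sigma> []) = card X ^ infc_from lam 0 \<sigma>"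
    using Sset_count[OF t X Gamma_nil[OF t]] by simp
  have "card (\<Union>\<sigma>\<in>G. Sset G lam X \<sigma> []) = (\<Sum>\<sigma>\<in>G. card (Sset G lam X \<sigma> []))"
    by (rule card_UN_disjoint) (use fG each in \<open>auto simp: Sset_def\<close>)
  then show ?thesis unfolding e using fG each by auto
qed

definition tr :: "nat list set \<Rightarrow> bool" where
  "tr G \<longleftrightarrow> finite G \<and> [] \<in> G \<and> (\<forall>s\<in>G. \<forall>k. take k s \<in> G)"

lemma infc_nil: "infc_from lam l [] = 0"
  unfolding infc_from_def by auto

lemma X_pow: "([:0,1:] :: int poly) ^ n = monom 1 n"
  by (simp add: monom_altdef)

lemma infc_cons: "infc_from lam 0 (i # t) = (if lam [i] = Infty then 1 else 0) + infc_from (sub_lab lam [i]) 0 t"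
proof -
  have a: "infc_from lam 0 (i # t) = (if lam [i] = Infty then 1 else 0) + infc_from lam 1 (i # t)"
    using infc_from_step[of 0 "i # t" lam] by simp
  have e: "{k. 1 < k \<and> k \<le> length (i # t) \<and> lam (take k (i # t)) = Infty} =
    Suc ` {k. 0 < k \<and> k \<le> length t \<and> sub_lab lam [i] (take k t) = Infty}"
  proof (intro equalityI subsetI)
    fix k assume "k \<in> {k. 1 < k \<and> k \<le> length (i # t) \<and> lam (take k (i # t)) = Infty}"
    then show "k \<in> Suc ` {k. 0 < k \<and> k \<le> length t \<and> sub_lab lam [i] (take k t) = Infty}"
      by (auto simp: sub_lab_def image_iff take_Cons' intro!: exI[of _ "k - 1"])
  next
    fix k assume "k \<in> Suc ` {k. 0 < k \<and> k \<le> length t \<and> sub_lab lam [i] (take k t) = Infty}"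
    then show "k \<in> {k. 1 < k \<and> k \<le> length (i # t) \<and> lam (take k (i # t)) = Infty}"
      by (auto simp: sub_lab_def split: if_splits)
  qed
  have "infc_from lam 1 (i # t) = infc_from (sub_lab lam [i]) 0 t"
    unfolding infc_from_def e by (simp add: card_image)
  then show ?thesis using a by simp
qed

lemma tpoly_aux_sum:
  "tr G \<Longrightarrow> Max (length ` G) \<le> k \<Longrightarrow> tpoly_aux k G lam = (\<Sum>\<sigma>\<in>G. [:0,1:] ^ infc_from lam 0 \<sigma>)"
proof (induction k arbitrary: G lam)
  case 0
  then have "G = {[]}" unfolding tr_def
    by (auto) (metis Max_ge finite_imageI image_eqI le_zero_eq length_0_conv)
  moreover have "infc_from lam 0 [] = 0" unfolding infc_from_def by auto
  ultimately show ?case by simp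
next
  case (Suc k)
  have fG: "finite G" and nG: "[] \<in> G" and cG: "\<forall>s\<in>G. \<forall>k. take k s \<in> G" using Suc.prems unfolding tr_def by auto
  define I where "I = {i. [i] \<in> G}"
  have fI: "finite I" unfolding I_def using fG
    by (rule finite_surj[where f="\<lambda>s. hd s"]) (force simp: image_iff)
  have trs: "tr (sub_plan G [i])" if "i \<in> I" for i
  proof -
    have "sub_plan G [i] = (\<lambda>s. tl s) ` {s \<in> G. take 1 s = [i]}"
      unfolding sub_plan_def by (auto simp: image_iff intro!: exI[of _ "i # _"]) (metis Cons_eq_append_conv append_take_drop_id list.sel(3) take_Suc take_eq_Nil2)
    then have "finite (sub_plan G [i])" using fG by simp
    moreover have "\<forall>s\<in>sub_plan G [i]. \<forall>k. take k s \<in> sub_plan G [i]"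
      unfolding sub_plan_def using cG by (auto) (metis take_Suc_Cons)
    ultimately show ?thesis using that unfolding tr_def I_def sub_plan_def by auto
  qed
  have mx: "Max (length ` sub_plan G [i]) \<le> k" if "i \<in> I" for i
  proof -
    have "\<forall>s\<in>sub_plan G [i]. length s \<le> k"
    proof
      fix s assume "s \<in> sub_plan G [i]"
      then have "i # s \<in> G" unfolding sub_plan_def by simp
      then have "length (i # s) \<le> Max (length ` G)" using fG by (intro Max_ge) (auto intro: image_eqI[where x="i # s"])
      then show "length s \<le> k" using Suc.prems(2) by simp
    qed
    moreover have "sub_plan G [i] \<noteq> {}" using that unfolding I_def sub_plan_def by auto
    ultimately show ?thesis using trs[OF that] unfolding tr_def by simp
  qed
  have decomp: "G = insert [] (\<Union>i\<in>I. (Cons i) ` sub_plan G [i])"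
    unfolding I_def sub_plan_def using nG cG
    by (auto simp: image_iff) (metis neq_Nil_conv take_Suc_Cons take_0 append_Cons append_Nil)
  have fin2: "\<And>i. i \<in> I \<Longrightarrow> finite ((Cons i) ` sub_plan G [i])" using trs unfolding tr_def by auto
  let ?f = "\<lambda>\<sigma>. ([:0,1:] :: int poly) ^ infc_from lam 0 \<sigma>"
  have "(\<Sum>\<sigma>\<in>G. ?f \<sigma>) = ?f [] + (\<Sum>\<sigma>\<in>(\<Union>i\<in>I. (Cons i) ` sub_plan G [i]). ?f \<sigma>)"
    by (subst decomp) (subst sum.insert, use fI fin2 in auto)
  also have "?f [] = 1" by (simp add: infc_nil)
  also have "(\<Sum>\<sigma>\<in>(\<Union>i\<in>I. (Cons i) ` sub_plan G [i]). ?f \<sigma>) =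
      (\<Sum>i\<in>I. \<Sum>\<sigma>\<in>(Cons i) ` sub_plan G [i]. ?f \<sigma>)"
    by (rule sum.UNION_disjoint) (use fI fin2 in auto)
  also have "\<dots> = (\<Sum>i\<in>I. \<Sum>t\<in>sub_plan G [i]. ?f (i # t))"
    by (rule sum.cong) (auto simp: sum.reindex)
  also have "\<dots> = (\<Sum>i\<in>I. lab_factor (lam [i]) * tpoly_aux k (sub_plan G [i]) (sub_lab lam [i]))"
  proof (rule sum.cong)
    fix i assume i: "i \<in> I"
    have "(\<Sum>t\<in>sub_plan G [i]. ?f (i # t)) =
        (\<Sum>t\<in>sub_plan G [i]. lab_factor (lam [i]) * [:0,1:] ^ infc_from (sub_lab lam [i]) 0 t)"
    proof (rule sum.cong)
      fix t show "?f (i # t) = lab_factor (lam [i]) * [:0,1:] ^ infc_from (sub_lab lam [i]) 0 t"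
        by (cases "lam [i]") (simp_all add: infc_cons lab_factor_def power_add)
    qed simp
    also have "\<dots> = lab_factor (lam [i]) * tpoly_aux k (sub_plan G [i]) (sub_lab lam [i])"
      using Suc.IH[OF trs[OF i] mx[OF i]] by (simp add: sum_distrib_left)
    finally show "(\<Sum>t\<in>sub_plan G [i]. ?f (i # t)) = lab_factor (lam [i]) * tpoly_aux k (sub_plan G [i]) (sub_lab lam [i])" .
  qed simp
  finally show ?case unfolding I_def by simp
qed

lemma tpoly_sum: "tree_plan G lam \<Longrightarrow> tpoly G lam = (\<Sum>\<sigma>\<in>G. [:0,1:] ^ infc_from lam 0 \<sigma>)"
  unfolding tpoly_def by (rule tpoly_aux_sum) (auto simp: tr_def tree_plan_def)

lemma degree_tpoly: assumes t: "tree_plan G lam"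
  shows "degree (tpoly G lam) = Max (infc_from lam 0 ` G)"
proof -
  have fG: "finite G" and nG: "[] \<in> G" using t unfolding tree_plan_def by auto
  define D where "D = Max (infc_from lam 0 ` G)"
  have c: "coeff (tpoly G lam) n = int (card {\<sigma>\<in>G. infc_from lam 0 \<sigma> = n})" for n
    unfolding tpoly_sum[OF t] X_pow coeff_sum using fG by (simp add: sum.If_cases Int_def)
  have "degree (tpoly G lam) \<le> D"
  proof (rule degree_le, intro allI impI)
    fix i assume i: "D < i"
    have "{\<sigma>\<in>G. infc_from lam 0 \<sigma> = i} = {}"
    proof -
      have "infc_from lam 0 \<sigma> \<le> D" if "\<sigma> \<in> G" for \<sigma> unfolding D_def using fG that by simp
      then show ?thesis using i by force
    qed
    then show "coeff (tpoly G lam) i = 0" unfolding c by (simp only: card.empty)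
  qed
  moreover have "D \<in> infc_from lam 0 ` G" unfolding D_def using fG nG by (intro Max_in) auto
  then have "coeff (tpoly G lam) D \<noteq> 0" unfolding c using fG by (auto simp: card_eq_0_iff)
  then have "D \<le> degree (tpoly G lam)" by (rule le_degree)
  ultimately show ?thesis unfolding D_def by simp
qed

lemma lcp_self: "prefix x y \<Longrightarrow> lcp x y = x"
  by (meson lcp_prefix1 lcp_prefix_iff prefix_order.antisym prefix_order.refl)

lemma L1: assumes "prefix u x" "prefix u y" "length u < length x" "\<not> prefix (take (Suc (length u)) x) y"
  shows "lcp x y = u"
proof -
  have a: "prefix u (lcp x y)" using assms lcp_prefix_iff by blast
  have b: "prefix (lcp x y) x" by (rule lcp_prefix1)
  have "length (lcp x y) \<le> length u"
  proof (rule ccontr)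
    assume "\<not> ?thesis"
    moreover have "length (take (Suc (length u)) x) = Suc (length u)" using assms(3) by simp
    ultimately have "prefix (take (Suc (length u)) x) (lcp x y)"
      using b take_is_prefix prefix_length_prefix by (metis not_le Suc_leI)
    then show False using assms(4) lcp_prefix2 prefix_order.trans by blast
  qed
  then have "prefix (lcp x y) u" using a b prefix_length_prefix prefix_order.trans by (metis prefix_def)
  then show ?thesis using a by (rule prefix_order.antisym)
qed

lemma L2: assumes "prefix a x" "prefix u x" "\<not> prefix a u" shows "prefix (take (Suc (length u)) x) a"
proof -
  have "length u < length a" using assms by (metis not_le prefix_length_prefix)
  moreover have "length (take (Suc (length u)) x) \<le> Suc (length u)" by simp
  ultimately show ?thesis using assms(1) take_is_prefix prefix_length_prefix by (metis Suc_leI order_trans)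
qed

lemma L3: assumes "prefix u x" "prefix (lcp x y) u" shows "lcp x y = lcp u y"
proof (rule prefix_antisym_all)
  fix w show "prefix w (lcp x y) \<longleftrightarrow> prefix w (lcp u y)"
    using assms lcp_prefix_iff prefix_order.trans by metis
qed

definition bb :: "'a list list \<Rightarrow> nat \<Rightarrow> 'a list" where
  "bb b j = (if j = 0 then [] else b ! (j - 1))"

definition inO :: "(nat \<times> nat option) list list \<Rightarrow> nat list \<Rightarrow> nat \<Rightarrow> nat list \<Rightarrow> (nat \<times> nat option) list \<Rightarrow> bool" where
  "inO b \<sigma> j \<tau> x \<longleftrightarrow> map fst x = \<sigma> \<and> map fst (lcp x (bb b j)) = \<tau> \<and>
     (\<forall>j'\<le>length b. prefix (lcp x (bb b j')) (lcp x (bb b j))) \<and>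
     (\<forall>j'<j. lcp x (bb b j') \<noteq> lcp x (bb b j)) \<and> x \<noteq> lcp x (bb b j)"

definition inS :: "(nat \<times> nat option) list list \<Rightarrow> nat \<Rightarrow> nat list \<Rightarrow> (nat \<times> nat option) list \<Rightarrow> bool" where
  "inS b j \<tau> x \<longleftrightarrow> prefix x (bb b j) \<and> map fst x = \<tau> \<and> (\<forall>j'<j. \<not> prefix x (bb b j'))"

datatype cls = Orb "nat list" nat "nat list" | Sng nat "nat list"

fun inC :: "(nat \<times> nat option) list list \<Rightarrow> cls \<Rightarrow> (nat \<times> nat option) list \<Rightarrow> bool" where
  "inC b (Orb \<sigma> j \<tau>) x = inO b \<sigma> j \<tau> x"
| "inC b (Sng j \<tau>) x = inS b j \<tau> x"

definition Rset :: "nat list set \<Rightarrow> nat \<Rightarrow> cls set" where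
  "Rset G m = {Orb \<sigma> j \<tau> | \<sigma> j \<tau>. \<sigma> \<in> G \<and> j \<le> m \<and> \<tau> \<in> G} \<union> {Sng j \<tau> | j \<tau>. j \<le> m \<and> \<tau> \<in> G}"

lemma inC_disj: assumes "inC b \<rho> x" "inC b \<rho>' x" "\<rho> \<in> Rset G (length b)" "\<rho>' \<in> Rset G (length b)"
  shows "\<rho> = \<rho>'"
proof (cases \<rho>)
  case (Orb \<sigma> j \<tau>)
  show ?thesis
  proof (cases \<rho>')
    case (Orb \<sigma>' j' \<tau>')
    have jb: "j \<le> length b" "j' \<le> length b" using assms \<open>\<rho> = _\<close> Orb unfolding Rset_def by auto
    have "j = j'"
    proof (rule ccontr)
      assume "j \<noteq> j'"
      then consider "j < j'" | "j' < j" by linarith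
      then show False
      proof cases
        case 1
        then show ?thesis using assms(1,2) \<open>\<rho> = _\<close> Orb jb
          by (simp add: inO_def) (meson prefix_order.antisym order_refl less_imp_le le_trans)
      next
        case 2
        then show ?thesis using assms(1,2) \<open>\<rho> = _\<close> Orb jb
          by (simp add: inO_def) (meson prefix_order.antisym order_refl less_imp_le le_trans)
      qed
    qed
    then show ?thesis using assms(1,2) \<open>\<rho> = _\<close> Orb by (simp add: inO_def)
  next
    case (Sng j' \<tau>')
    have jb: "j' \<le> length b" using assms Sng unfolding Rset_def by auto
    have "lcp x (bb b j') = x" using assms(2) Sng by (simp add: inS_def lcp_self)
    then show ?thesis using assms(1) \<open>\<rho> = _\<close> jb
      by (simp add: inO_def) (metis lcp_prefix1 prefix_order.antisym)
  qed
next
  case (Sng j \<tau>)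
  show ?thesis
  proof (cases \<rho>')
    case (Orb \<sigma>' j' \<tau>')
    have jb: "j \<le> length b" using assms Sng unfolding Rset_def by auto
    have "lcp x (bb b j) = x" using assms(1) Sng by (simp add: inS_def lcp_self)
    then show ?thesis using assms(2) Orb jb
      by (simp add: inO_def) (metis lcp_prefix1 prefix_order.antisym)
  next
    case (Sng j' \<tau>')
    have "j = j'" using assms(1,2) \<open>\<rho> = Sng j \<tau>\<close> Sng
      by (simp add: inS_def) (metis linorder_neqE_nat)
    then show ?thesis using assms(1,2) \<open>\<rho> = Sng j \<tau>\<close> Sng by (simp add: inS_def)
  qed
qed

lemma inC_cover: assumes t: "tree_plan G lam" and x: "x \<in> Gamma_set G lam X"
  shows "\<exists>\<rho>\<in>Rset G (length b). inC b \<rho> x"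
proof (cases "\<exists>j\<le>length b. prefix x (bb b j)")
  case True
  define j where "j = (LEAST j. j \<le> length b \<and> prefix x (bb b j))"
  have j: "j \<le> length b" "prefix x (bb b j)" using LeastI_ex[OF True] unfolding j_def by auto
  have jl: "\<forall>j'<j. \<not> prefix x (bb b j')"
    using not_less_Least j j_def by (metis less_le_trans less_imp_le)
  have "map fst x \<in> G" using x unfolding Gamma_set_iff by auto
  then have "Sng j (map fst x) \<in> Rset G (length b)" using j unfolding Rset_def by auto
  moreover have "inC b (Sng j (map fst x)) x" using j jl by (simp add: inS_def)
  ultimately show ?thesis by blast
next
  case False
  define g where "g j = length (lcp x (bb b j))" for j
  have "finite (g ` {..length b})" by simp
  define M where "M = Max (g ` {..length b})"
  have "M \<in> g ` {..length b}" unfolding M_def by (intro Max_in) auto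
  then have ex: "\<exists>j. j \<le> length b \<and> g j = M" by auto
  define j where "j = (LEAST j. j \<le> length b \<and> g j = M)"
  have j: "j \<le> length b" "g j = M" using LeastI_ex[OF ex] unfolding j_def by auto
  have gm: "g j' \<le> M" if "j' \<le> length b" for j' unfolding M_def using that by (intro Max_ge) auto
  have pre: "prefix (lcp x (bb b j')) (lcp x (bb b j))" if "j' \<le> length b" for j'
    using gm[OF that] j lcp_prefix1 unfolding g_def by (metis prefix_length_prefix)
  have neq: "lcp x (bb b j') \<noteq> lcp x (bb b j)" if "j' < j" for j'
  proof
    assume "lcp x (bb b j') = lcp x (bb b j)"
    then have "j' \<le> length b \<and> g j' = M" using that j unfolding g_def by simp
    then show False using not_less_Least that unfolding j_def by blast
  qed
  have xn: "x \<noteq> lcp x (bb b j)" using False j lcp_prefix2 by metis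
  have G1: "map fst x \<in> G" using x unfolding Gamma_set_iff by auto
  have G2: "map fst (lcp x (bb b j)) \<in> G" using Gamma_lcp[OF t x] unfolding Gamma_set_iff by auto
  have "Orb (map fst x) j (map fst (lcp x (bb b j))) \<in> Rset G (length b)" using j G1 G2 unfolding Rset_def by auto
  moreover have "inC b (Orb (map fst x) j (map fst (lcp x (bb b j)))) x"
    using pre neq xn by (simp add: inO_def)
  ultimately show ?thesis by blast
qed

lemma bb_in: "set b \<subseteq> S \<Longrightarrow> [] \<in> S \<Longrightarrow> j \<le> length b \<Longrightarrow> bb b j \<in> S"
  unfolding bb_def by (auto simp: nth_mem subsetD)

lemma inO_u: assumes "inO b \<sigma> j \<tau> x" "inO b \<sigma> j \<tau> x'"
  shows "lcp x' (bb b j) = lcp x (bb b j)"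
proof -
  have "length (lcp x' (bb b j)) = length (lcp x (bb b j))"
    using assms unfolding inO_def by (metis length_map)
  then show ?thesis using prefix_same_len lcp_prefix2 by metis
qed

lemma inO_v: assumes "inO b \<sigma> j \<tau> x" "j' \<le> length b"
  shows "\<not> prefix (take (Suc (length (lcp x (bb b j)))) x) (bb b j')"
proof
  let ?u = "lcp x (bb b j)" let ?v = "take (Suc (length ?u)) x"
  assume a: "prefix ?v (bb b j')"
  have ux: "prefix ?u x" by (rule lcp_prefix1)
  have "?u \<noteq> x" using assms unfolding inO_def by auto
  then have "length ?u < length x" using ux by (metis prefix_length_le prefix_same_len order_refl le_neq_implies_less prefix_order.refl)
  then have lv: "length ?v = Suc (length ?u)" by simp
  have "prefix ?v (lcp x (bb b j'))" using a lcp_prefix_iff take_is_prefix by blast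
  also have "prefix (lcp x (bb b j')) ?u" using assms unfolding inO_def by auto
  finally have "length ?v \<le> length ?u" by (rule prefix_length_le)
  then show False using lv by simp
qed

lemma inv_Orb:
  assumes t: "tree_plan G lam" and b: "set b \<subseteq> Gamma_set G lam X"
    and x: "x \<in> Gamma_set G lam X" "x' \<in> Gamma_set G lam X"
    and o: "inO b \<sigma> j \<tau> x" "inO b \<sigma> j \<tau> x'"
  shows "\<exists>f. hom_st G (GS G lam X) (GS G lam X) f \<and> f x = x' \<and> (\<forall>j'\<le>length b. f (bb b j') = bb b j')"
proof -
  let ?u = "lcp x (bb b j)"
  have u': "lcp x' (bb b j) = ?u" by (rule inO_u[OF o])
  have ux: "prefix ?u x" "prefix ?u x'" using lcp_prefix1 u' by metis+
  have tk: "take (length ?u) x = take (length ?u) x'" using ux by (metis append_eq_conv_conj prefix_def)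
  have fx: "map fst x = map fst x'" using o unfolding inO_def by auto
  have le: "length ?u \<le> length x" using ux prefix_length_le by blast
  obtain f where f: "hom_st G (GS G lam X) (GS G lam X) f" "f x = x'"
    "\<forall>z. \<not> prefix (take (Suc (length ?u)) x) z \<and> \<not> prefix (take (Suc (length ?u)) x') z \<longrightarrow> f z = z"
    using orbit[OF t x fx le tk] by blast
  have "\<forall>j'\<le>length b. f (bb b j') = bb b j'"
    using f(3) inO_v[OF o(1)] inO_v[OF o(2)] u' by metis
  then show ?thesis using f by blast
qed

lemma map_fix: "(\<forall>j'\<le>length b. f (bb b j') = bb b j') \<Longrightarrow> map f b = b"
proof (rule nth_equalityI)
  fix i assume a: "\<forall>j'\<le>length b. f (bb b j') = bb b j'" and i: "i < length (map f b)"
  then have "f (bb b (Suc i)) = bb b (Suc i)" by simp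
  then show "map f b ! i = b ! i" using i by (simp add: bb_def)
qed simp

lemma inv_sat:
  assumes t: "tree_plan G lam" and b: "set b \<subseteq> Gamma_set G lam X"
    and x: "x \<in> Gamma_set G lam X" "x' \<in> Gamma_set G lam X"
    and r: "\<rho> \<in> Rset G (length b)" and c: "inC b \<rho> x" "inC b \<rho> x'"
    and l: "in_lang G \<phi>"
  shows "sat (GS G lam X) (env (GS G lam X) x b) \<phi> \<longleftrightarrow> sat (GS G lam X) (env (GS G lam X) x' b) \<phi>"
proof (cases \<rho>)
  case (Orb \<sigma> j \<tau>)
  obtain f where f: "hom_st G (GS G lam X) (GS G lam X) f" "f x = x'" "\<forall>j'\<le>length b. f (bb b j') = bb b j'"
    using inv_Orb[OF t b x, of \<sigma> j \<tau>] c Orb by auto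
  have e: "\<forall>v. env (GS G lam X) x b v \<in> carrier (GS G lam X)"
    by (rule env_in) (use Gamma_nil[OF t] x b in \<open>auto simp: GS_simps\<close>)
  have "sat (GS G lam X) (env (GS G lam X) x b) \<phi> \<longleftrightarrow> sat (GS G lam X) (f \<circ> env (GS G lam X) x b) \<phi>"
    by (rule sat_hom[OF GS_closed[OF t] f(1) l e])
  also have "f \<circ> env (GS G lam X) x b = env (GS G lam X) x' b"
    using env_comp[of f "GS G lam X" "GS G lam X" x b] f(1) f(2) map_fix[OF f(3)]
    unfolding hom_st_def by simp
  finally show ?thesis .
next
  case (Sng j \<tau>)
  have "prefix x (bb b j)" "prefix x' (bb b j)" "map fst x = \<tau>" "map fst x' = \<tau>"
    using c Sng by (auto simp: inS_def)
  then have "x = x'" using prefix_same_len by (metis length_map)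
  then show ?thesis by simp
qed

definition cset :: "nat list set \<Rightarrow> (nat list \<Rightarrow> label) \<Rightarrow> nat set \<Rightarrow> (nat \<times> nat option) list list \<Rightarrow> cls \<Rightarrow> (nat \<times> nat option) list set" where
  "cset G lam X b \<rho> = {x \<in> Gamma_set G lam X. inC b \<rho> x}"

fun kk :: "(nat list \<Rightarrow> label) \<Rightarrow> cls \<Rightarrow> nat" where
  "kk lam (Orb \<sigma> j \<tau>) = infc_from lam (length \<tau>) \<sigma>"
| "kk lam (Sng j \<tau>) = 0"

lemma card_Sng: "card (cset G lam X b (Sng j \<tau>)) \<le> 1"
proof -
  have "cset G lam X b (Sng j \<tau>) \<subseteq> {take (length \<tau>) (bb b j)}"
  proof
    fix x assume "x \<in> cset G lam X b (Sng j \<tau>)"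
    then have "prefix x (bb b j)" "map fst x = \<tau>" unfolding cset_def by (auto simp: inS_def)
    then show "x \<in> {take (length \<tau>) (bb b j)}" by (auto simp: prefix_def)
  qed
  then show ?thesis using card_mono[of "{take (length \<tau>) (bb b j)}"] by simp
qed

lemma prefix_take: "prefix u x \<Longrightarrow> length u \<le> k \<Longrightarrow> prefix u (take k x)"
  by (auto simp: prefix_def)

locale OC =
  fixes G lam X b \<sigma> j \<tau> x0
  assumes t: "tree_plan G lam" and X: "finite X" and bG: "set b \<subseteq> Gamma_set G lam X"
    and x0: "x0 \<in> Gamma_set G lam X" and o: "inO b \<sigma> j \<tau> x0" and jb: "j \<le> length b"
begin

definition "u = lcp x0 (bb b j)"

lemma u_pre: "prefix u x0" "prefix u (bb b j)" unfolding u_def by (rule lcp_prefix1, rule lcp_prefix2)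
lemma u_G: "u \<in> Gamma_set G lam X" using Gamma_lcp[OF t x0] unfolding u_def .
lemma u_tau: "map fst u = \<tau>" using o unfolding inO_def u_def by auto
lemma x0_sig: "map fst x0 = \<sigma>" using o unfolding inO_def by auto
lemma sig_G: "\<sigma> \<in> G" using x0 x0_sig unfolding Gamma_set_iff by auto
lemma u_sig: "prefix (map fst u) \<sigma>" using u_pre x0_sig map_mono_prefix by blast
lemma u_len: "length u < length x0"
proof -
  have "u \<noteq> x0" using o unfolding inO_def u_def by auto
  then show ?thesis using u_pre(1) by (metis le_neq_implies_less prefix_length_le prefix_same_len prefix_order.refl)
qed
lemma len_sig: "length x0 = length \<sigma>" using x0_sig by (metis length_map)
lemma len_tau: "length \<tau> = length u" using u_tau by (metis length_map)

lemma cls_sub: "cset G lam X b (Orb \<sigma> j \<tau>) \<subseteq> Sset G lam X \<sigma> u"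
proof
  fix x assume "x \<in> cset G lam X b (Orb \<sigma> j \<tau>)"
  then have x: "x \<in> Gamma_set G lam X" "inO b \<sigma> j \<tau> x" unfolding cset_def by auto
  have "lcp x (bb b j) = u" using inO_u[OF o x(2)] unfolding u_def .
  then have "prefix u x" by (metis lcp_prefix1)
  then show "x \<in> Sset G lam X \<sigma> u" using x unfolding Sset_def inO_def by auto
qed

lemma upper: "finite (cset G lam X b (Orb \<sigma> j \<tau>)) \<and> card (cset G lam X b (Orb \<sigma> j \<tau>)) \<le> card X ^ infc_from lam (length \<tau>) \<sigma>"
  using Sset_count[OF t X u_G sig_G u_sig] cls_sub len_tau by (metis card_mono finite_subset)

lemma sub_good: assumes v: "prefix u v" "length v = Suc (length u)" "\<not> (\<exists>j'\<le>length b. prefix v (bb b j'))"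
  shows "Sset G lam X \<sigma> v \<subseteq> cset G lam X b (Orb \<sigma> j \<tau>)"
proof
  fix x assume "x \<in> Sset G lam X \<sigma> v"
  then have xG: "x \<in> Gamma_set G lam X" and fx: "map fst x = \<sigma>" and vx: "prefix v x" unfolding Sset_def by auto
  have ux: "prefix u x" using v(1) vx by (rule prefix_order.trans)
  have lvx: "length v \<le> length x" using vx prefix_length_le by blast
  have tv: "take (Suc (length u)) x = v" using vx v(2) by (metis append_eq_conv_conj prefix_def)
  have lux: "length u < length x" using lvx v(2) by simp
  have l1: "lcp x (bb b j) = u" by (rule L1[OF ux u_pre(2) lux]) (use tv v(3) jb in auto)
  have l2: "prefix (lcp x (bb b j')) u" if "j' \<le> length b" for j'
  proof (rule ccontr)
    assume "\<not> ?thesis"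
    then have "prefix (take (Suc (length u)) x) (lcp x (bb b j'))" using L2[OF lcp_prefix1 ux] by blast
    then have "prefix v (bb b j')" using tv lcp_prefix2 prefix_order.trans by metis
    then show False using v(3) that by blast
  qed
  have l3: "lcp x (bb b j') \<noteq> u" if "j' < j" for j'
  proof -
    have "lcp x (bb b j') = lcp u (bb b j')" by (rule L3[OF ux l2]) (use that jb in auto)
    moreover have "lcp x0 (bb b j') = lcp u (bb b j')"
      by (rule L3[OF u_pre(1)]) (use o that jb in \<open>auto simp: inO_def u_def\<close>)
    moreover have "lcp x0 (bb b j') \<noteq> u" using o that unfolding inO_def u_def by auto
    ultimately show ?thesis by simp
  qed
  have "x \<noteq> u" using lux by auto
  then have "inO b \<sigma> j \<tau> x" unfolding inO_def using fx l1 l2 l3 u_tau by auto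
  then show "x \<in> cset G lam X b (Orb \<sigma> j \<tau>)" using xG unfolding cset_def by auto
qed

lemma v_count: assumes v: "v \<in> Gamma_set G lam X" "prefix u v" "length v = Suc (length u)" "map fst v = take (Suc (length u)) \<sigma>"
  shows "finite (Sset G lam X \<sigma> v) \<and> card (Sset G lam X \<sigma> v) = card X ^ infc_from lam (Suc (length u)) \<sigma>"
proof -
  have "prefix (map fst v) \<sigma>" using v(4) by (simp add: take_is_prefix)
  then show ?thesis using Sset_count[OF t X v(1) sig_G] v(3) by simp
qed

lemma k_step: "infc_from lam (length u) \<sigma> = (if lam (take (Suc (length u)) \<sigma>) = Infty then 1 else 0) + infc_from lam (Suc (length u)) \<sigma>"
  using infc_from_step u_len len_sig by simp

lemma fin_cls: "finite (cset G lam X b (Orb \<sigma> j \<tau>))" using upper by simp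

lemma lower_One: assumes "lam (take (Suc (length u)) \<sigma>) \<noteq> Infty"
  shows "card X ^ infc_from lam (length u) \<sigma> \<le> card (cset G lam X b (Orb \<sigma> j \<tau>))"
proof -
  define v where "v = take (Suc (length u)) x0"
  have vG: "v \<in> Gamma_set G lam X" unfolding v_def by (rule Gamma_take[OF t x0])
  have uv: "prefix u v" unfolding v_def using u_pre(1) by (rule prefix_take) simp
  have lv: "length v = Suc (length u)" unfolding v_def using u_len by simp
  have fv: "map fst v = take (Suc (length u)) \<sigma>" unfolding v_def using x0_sig by (metis take_map)
  have good: "\<not> (\<exists>j'\<le>length b. prefix v (bb b j'))" using inO_v[OF o] unfolding v_def u_def by blast
  have "card (Sset G lam X \<sigma> v) \<le> card (cset G lam X b (Orb \<sigma> j \<tau>))"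
    by (rule card_mono[OF fin_cls sub_good[OF uv lv good]])
  then show ?thesis using v_count[OF vG uv lv fv] k_step assms by simp
qed

lemma lower_Infty: assumes I: "lam (take (Suc (length u)) \<sigma>) = Infty" and Xe: "X = {1..n}"
  shows "(real n - real (Suc (length b))) * real n ^ infc_from lam (Suc (length u)) \<sigma>
           \<le> real (card (cset G lam X b (Orb \<sigma> j \<tau>)))"
proof -
  define i where "i = \<sigma> ! length u"
  define v where "v s = u @ [(i, Some s)]" for s
  have ls: "length u < length \<sigma>" using u_len len_sig by simp
  have fv: "map fst (v s) = take (Suc (length u)) \<sigma>" for s
    unfolding v_def i_def using u_sig ls
    by (metis (no_types, lifting) append_eq_conv_conj len_tau length_map list.simps(8,9) map_append
        prefix_def fst_conv take_Suc_conv_app_nth u_tau)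
  have vG: "v s \<in> Gamma_set G lam X" if "s \<in> X" for s
  proof -
    have "map fst u @ [i] \<in> G" using fv[of s] tree_take[OF t sig_G] unfolding v_def by simp
    moreover have "ok lam X (map fst u @ [i]) (Some s)" using fv[of s] I that unfolding ok_def v_def by simp
    ultimately show ?thesis unfolding v_def using Gamma_snoc[OF u_G] by blast
  qed
  have uv: "prefix u (v s)" "length (v s) = Suc (length u)" for s unfolding v_def by auto
  define Good where "Good = {s \<in> X. \<not> (\<exists>j'\<le>length b. prefix (v s) (bb b j'))}"
  have bad: "X - Good \<subseteq> (\<Union>j'\<in>{..length b}. {s. prefix (v s) (bb b j')})" unfolding Good_def by auto
  have sub1: "{s. prefix (v s) (bb b j')} \<subseteq> {the (snd (last (take (Suc (length u)) (bb b j'))))}" for j'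
  proof
    fix s assume "s \<in> {s. prefix (v s) (bb b j')}"
    then have "v s = take (Suc (length u)) (bb b j')" using uv(2)[of s] by (auto simp: prefix_def)
    then have "the (snd (last (take (Suc (length u)) (bb b j')))) = s" unfolding v_def
      by (metis last_snoc snd_conv option.sel)
    then show "s \<in> {the (snd (last (take (Suc (length u)) (bb b j'))))}" by simp
  qed
  have one: "card {s. prefix (v s) (bb b j')} \<le> 1" for j'
    using card_mono[OF _ sub1[of j']] by simp
  have fin1: "finite {s. prefix (v s) (bb b j')}" for j'
    using finite_subset[OF sub1[of j']] by simp
  have "card (X - Good) \<le> card (\<Union>j'\<in>{..length b}. {s. prefix (v s) (bb b j')})"
    by (rule card_mono[OF _ bad]) (use fin1 in auto)
  also have "\<dots> \<le> (\<Sum>j'\<in>{..length b}. card {s. prefix (v s) (bb b j')})" by (rule card_UN_le) simp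
  also have "\<dots> \<le> (\<Sum>j'\<in>{..length b}. 1)" by (rule sum_mono) (rule one)
  finally have cb: "card (X - Good) \<le> Suc (length b)" by simp
  have gX: "Good \<subseteq> X" unfolding Good_def by auto
  have cg: "card X \<le> card Good + Suc (length b)"
    using cb card_Diff_subset[OF finite_subset[OF gX X] gX] card_mono[OF X gX] by linarith
  have fG: "finite Good" using finite_subset[OF gX X] .
  have subs: "(\<Union>s\<in>Good. Sset G lam X \<sigma> (v s)) \<subseteq> cset G lam X b (Orb \<sigma> j \<tau>)"
    using sub_good[OF uv] unfolding Good_def by blast
  have ea: "finite (Sset G lam X \<sigma> (v s)) \<and> card (Sset G lam X \<sigma> (v s)) = card X ^ infc_from lam (Suc (length u)) \<sigma>"
    if "s \<in> Good" for s
    using v_count[OF vG uv fv] that gX by blast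
  have "card (\<Union>s\<in>Good. Sset G lam X \<sigma> (v s)) = (\<Sum>s\<in>Good. card (Sset G lam X \<sigma> (v s)))"
    by (rule card_UN_disjoint) (use fG ea in \<open>auto simp: Sset_def v_def prefix_def\<close>)
  also have "\<dots> = card Good * card X ^ infc_from lam (Suc (length u)) \<sigma>" using ea by simp
  finally have "card Good * card X ^ infc_from lam (Suc (length u)) \<sigma> \<le> card (cset G lam X b (Orb \<sigma> j \<tau>))"
    using card_mono[OF fin_cls subs] by simp
  moreover have "real n - real (Suc (length b)) \<le> real (card Good)" using cg Xe by simp
  ultimately show ?thesis
  proof -
    assume A: "card Good * card X ^ infc_from lam (Suc (length u)) \<sigma> \<le> card (cset G lam X b (Orb \<sigma> j \<tau>))"
      and B: "real n - real (Suc (length b)) \<le> real (card Good)"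
    have cX: "card X = n" using Xe by simp
    have "(real n - real (Suc (length b))) * real n ^ infc_from lam (Suc (length u)) \<sigma>
        \<le> real (card Good) * real n ^ infc_from lam (Suc (length u)) \<sigma>"
      by (rule mult_right_mono[OF B]) simp
    also have "\<dots> = real (card Good * card X ^ infc_from lam (Suc (length u)) \<sigma>)" using cX by simp
    also have "\<dots> \<le> real (card (cset G lam X b (Orb \<sigma> j \<tau>)))" using A by (simp only: of_nat_le_iff)
    finally show ?thesis .
  qed
qed

end

lemma Rset_eq: "Rset G m = (\<lambda>(\<sigma>,j,\<tau>). Orb \<sigma> j \<tau>) ` (G \<times> {..m} \<times> G) \<union> (\<lambda>(j,\<tau>). Sng j \<tau>) ` ({..m} \<times> G)"
  unfolding Rset_def by (auto simp: image_iff)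

lemma Rset_finite: "finite G \<Longrightarrow> finite (Rset G m)"
  unfolding Rset_eq by auto

definition Sb where
  "Sb G lam X \<phi> b = {\<rho> \<in> Rset G (length b). \<exists>x\<in>Gamma_set G lam X. inC b \<rho> x \<and> sat (GS G lam X) (env (GS G lam X) x b) \<phi>}"

lemma def_set_eq:
  assumes t: "tree_plan G lam" and b: "set b \<subseteq> Gamma_set G lam X" and l: "in_lang G \<phi>"
  shows "def_set (GS G lam X) \<phi> b = (\<Union>\<rho>\<in>Sb G lam X \<phi> b. cset G lam X b \<rho>)"
proof (intro equalityI subsetI)
  fix x assume "x \<in> def_set (GS G lam X) \<phi> b"
  then have x: "x \<in> Gamma_set G lam X" "sat (GS G lam X) (env (GS G lam X) x b) \<phi>"
    unfolding def_set_def GS_simps by auto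
  obtain \<rho> where r: "\<rho> \<in> Rset G (length b)" "inC b \<rho> x" using inC_cover[OF t x(1)] by blast
  then have "\<rho> \<in> Sb G lam X \<phi> b" unfolding Sb_def using x by auto
  then show "x \<in> (\<Union>\<rho>\<in>Sb G lam X \<phi> b. cset G lam X b \<rho>)" using r x unfolding cset_def by auto
next
  fix x assume "x \<in> (\<Union>\<rho>\<in>Sb G lam X \<phi> b. cset G lam X b \<rho>)"
  then obtain \<rho> x' where r: "\<rho> \<in> Rset G (length b)" "x \<in> Gamma_set G lam X" "inC b \<rho> x"
    "x' \<in> Gamma_set G lam X" "inC b \<rho> x'" "sat (GS G lam X) (env (GS G lam X) x' b) \<phi>"
    unfolding Sb_def cset_def by auto
  have "sat (GS G lam X) (env (GS G lam X) x b) \<phi>" using inv_sat[OF t b r(2,4,1,3,5) l] r(6) by simp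
  then show "x \<in> def_set (GS G lam X) \<phi> b" using r(2) unfolding def_set_def GS_simps by auto
qed

lemma def_set_card:
  assumes t: "tree_plan G lam" and X: "finite X" and b: "set b \<subseteq> Gamma_set G lam X" and l: "in_lang G \<phi>"
  shows "card (def_set (GS G lam X) \<phi> b) = (\<Sum>\<rho>\<in>Sb G lam X \<phi> b. card (cset G lam X b \<rho>))"
proof -
  have fG: "finite G" using t unfolding tree_plan_def by auto
  have fS: "finite (Sb G lam X \<phi> b)" using Rset_finite[OF fG] unfolding Sb_def by (rule finite_subset[rotated]) auto
  have fC: "finite (cset G lam X b \<rho>)" for \<rho>
    using Gamma_finite_card[OF t X] unfolding cset_def by auto
  show ?thesis unfolding def_set_eq[OF t b l]
  proof (rule card_UN_disjoint[OF fS])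
    show "\<forall>i\<in>Sb G lam X \<phi> b. finite (cset G lam X b i)" using fC by auto
    show "\<forall>i\<in>Sb G lam X \<phi> b. \<forall>j\<in>Sb G lam X \<phi> b. i \<noteq> j \<longrightarrow> cset G lam X b i \<inter> cset G lam X b j = {}"
      using inC_disj unfolding Sb_def cset_def by blast
  qed
qed

lemma bound_rho:
  assumes t: "tree_plan G lam" and b: "set b \<subseteq> Gamma_set G lam {1..n}"
    and r: "\<rho> \<in> Rset G (length b)" and ne: "\<exists>x\<in>Gamma_set G lam {1..n}. inC b \<rho> x"
  shows "card (cset G lam {1..n} b \<rho>) \<le> n ^ kk lam \<rho> \<and> 1 \<le> card (cset G lam {1..n} b \<rho>) \<and>
    (1 \<le> kk lam \<rho> \<longrightarrow> real n ^ kk lam \<rho> - real (Suc (length b)) * real n ^ (kk lam \<rho> - 1) \<le> real (card (cset G lam {1..n} b \<rho>)))"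
proof -
  have fC: "finite (cset G lam {1..n} b \<rho>)"
    using Gamma_finite_card[OF t, of "{1..n}"] unfolding cset_def by auto
  have ge1: "1 \<le> card (cset G lam {1..n} b \<rho>)"
    using ne fC unfolding cset_def by (metis (no_types, lifting) One_nat_def Suc_leI card_gt_0_iff empty_iff mem_Collect_eq)
  show ?thesis
  proof (cases \<rho>)
    case (Sng j \<tau>)
    then show ?thesis using card_Sng[of G lam "{1..n}" b j \<tau>] ge1 by simp
  next
    case (Orb \<sigma> j \<tau>)
    obtain x0 where x0: "x0 \<in> Gamma_set G lam {1..n}" "inO b \<sigma> j \<tau> x0" using ne Orb by auto
    have jb: "j \<le> length b" using r Orb unfolding Rset_def by auto
    interpret OC G lam "{1..n}" b \<sigma> j \<tau> x0 by unfold_locales (use t b x0 jb in auto)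
    have kk: "kk lam \<rho> = infc_from lam (length u) \<sigma>" using Orb len_tau by simp
    have up: "card (cset G lam {1..n} b \<rho>) \<le> n ^ kk lam \<rho>" using upper Orb by simp
    have lo: "1 \<le> kk lam \<rho> \<longrightarrow> real n ^ kk lam \<rho> - real (Suc (length b)) * real n ^ (kk lam \<rho> - 1) \<le> real (card (cset G lam {1..n} b \<rho>))"
    proof (cases "lam (take (Suc (length u)) \<sigma>) = Infty")
      case True
      have k: "kk lam \<rho> = Suc (infc_from lam (Suc (length u)) \<sigma>)" using kk k_step True by simp
      have "real n ^ kk lam \<rho> - real (Suc (length b)) * real n ^ (kk lam \<rho> - 1) =
            (real n - real (Suc (length b))) * real n ^ infc_from lam (Suc (length u)) \<sigma>"
        unfolding k by (simp add: algebra_simps)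
      then show ?thesis using lower_Infty[OF True refl] Orb by simp
    next
      case False
      have "n ^ kk lam \<rho> \<le> card (cset G lam {1..n} b \<rho>)" using lower_One[OF False] kk Orb by simp
      then have "real n ^ kk lam \<rho> \<le> real (card (cset G lam {1..n} b \<rho>))"
        by (metis of_nat_le_iff of_nat_power)
      moreover have "0 \<le> real (Suc (length b)) * real n ^ (kk lam \<rho> - 1)" by simp
      ultimately show ?thesis by linarith
    qed
    show ?thesis using up ge1 lo by blast
  qed
qed

lemma aggregate:
  fixes f kf :: "'c \<Rightarrow> nat" and n K :: nat and a :: real
  assumes S: "finite S" and n: "1 \<le> n" and a: "0 \<le> a"
    and up: "\<And>\<rho>. \<rho> \<in> S \<Longrightarrow> f \<rho> \<le> n ^ kf \<rho>" and ge: "\<And>\<rho>. \<rho> \<in> S \<Longrightarrow> 1 \<le> f \<rho>"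
    and lo: "\<And>\<rho>. \<rho> \<in> S \<Longrightarrow> 1 \<le> kf \<rho> \<Longrightarrow> real n ^ kf \<rho> - a * real n ^ (kf \<rho> - 1) \<le> real (f \<rho>)"
    and K: "\<And>\<rho>. \<rho> \<in> S \<Longrightarrow> kf \<rho> \<le> K"
  shows "(K = 0 \<longrightarrow> (\<Sum>\<rho>\<in>S. f \<rho>) = card {\<rho>\<in>S. kf \<rho> = K}) \<and>
    (1 \<le> K \<longrightarrow> \<bar>real (\<Sum>\<rho>\<in>S. f \<rho>) - real (card {\<rho>\<in>S. kf \<rho> = K}) * real n ^ K\<bar>
        \<le> real (card S) * (a + 1) * real n ^ (K - 1))"
proof (intro conjI impI)
  assume K0: "K = 0"
  have "f \<rho> = 1" if "\<rho> \<in> S" for \<rho> using up[OF that] ge[OF that] K[OF that] K0 by simp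
  moreover have "{\<rho>\<in>S. kf \<rho> = K} = S" using K K0 by auto
  ultimately show "(\<Sum>\<rho>\<in>S. f \<rho>) = card {\<rho>\<in>S. kf \<rho> = K}" by simp
next
  assume K1: "1 \<le> K"
  define S1 where "S1 = {\<rho>\<in>S. kf \<rho> = K}"
  define S2 where "S2 = {\<rho>\<in>S. kf \<rho> \<noteq> K}"
  have fin: "finite S1" "finite S2" using S unfolding S1_def S2_def by auto
  have split: "real (\<Sum>\<rho>\<in>S. f \<rho>) = (\<Sum>\<rho>\<in>S1. real (f \<rho>)) + (\<Sum>\<rho>\<in>S2. real (f \<rho>))"
  proof -
    have "S = S1 \<union> S2" "S1 \<inter> S2 = {}" unfolding S1_def S2_def by auto
    then show ?thesis using fin by (simp add: sum.union_disjoint)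
  qed
  have nK: "real n ^ K = real n * real n ^ (K - 1)" using K1 by (metis Suc_diff_le diff_Suc_1 power_Suc)
  have pos: "0 \<le> real n ^ (K - 1)" by simp
  have u1: "(\<Sum>\<rho>\<in>S1. real (f \<rho>)) \<le> real (card S1) * real n ^ K"
  proof -
    have "(\<Sum>\<rho>\<in>S1. real (f \<rho>)) \<le> (\<Sum>\<rho>\<in>S1. real n ^ K)"
      by (rule sum_mono) (use up S1_def in \<open>auto simp flip: of_nat_power\<close>)
    then show ?thesis by simp
  qed
  have l1: "real (card S1) * (real n ^ K - a * real n ^ (K - 1)) \<le> (\<Sum>\<rho>\<in>S1. real (f \<rho>))"
  proof -
    have "(\<Sum>\<rho>\<in>S1. real n ^ K - a * real n ^ (K - 1)) \<le> (\<Sum>\<rho>\<in>S1. real (f \<rho>))"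
      by (rule sum_mono) (use lo K1 S1_def in auto)
    then show ?thesis by simp
  qed
  have u2: "(\<Sum>\<rho>\<in>S2. real (f \<rho>)) \<le> real (card S2) * real n ^ (K - 1)"
  proof -
    have "real (f \<rho>) \<le> real n ^ (K - 1)" if "\<rho> \<in> S2" for \<rho>
    proof -
      have "kf \<rho> \<le> K - 1" using K that unfolding S2_def by fastforce
      then have "real n ^ kf \<rho> \<le> real n ^ (K - 1)" using n by (intro power_increasing) auto
      moreover have "real (f \<rho>) \<le> real n ^ kf \<rho>" using up that unfolding S2_def by (metis (mono_tags, lifting) mem_Collect_eq of_nat_le_iff of_nat_power)
      ultimately show ?thesis by linarith
    qed
    then have "(\<Sum>\<rho>\<in>S2. real (f \<rho>)) \<le> (\<Sum>\<rho>\<in>S2. real n ^ (K - 1))" by (rule sum_mono)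
    then show ?thesis by simp
  qed
  have l2: "0 \<le> (\<Sum>\<rho>\<in>S2. real (f \<rho>))" by (rule sum_nonneg) simp
  have c12: "card S1 \<le> card S" "card S2 \<le> card S" using S unfolding S1_def S2_def by (auto intro: card_mono)
  have A: "real (card S1) * a * real n ^ (K - 1) \<le> real (card S) * a * real n ^ (K - 1)"
    using c12 a pos by (intro mult_right_mono) auto
  have B: "real (card S2) * real n ^ (K - 1) \<le> real (card S) * real n ^ (K - 1)"
    using c12 pos by (intro mult_right_mono) auto
  have C: "0 \<le> real (card S) * a * real n ^ (K - 1)" using a pos by simp
  have D: "0 \<le> real (card S) * real n ^ (K - 1)" using pos by simp
  show "\<bar>real (\<Sum>\<rho>\<in>S. f \<rho>) - real (card {\<rho>\<in>S. kf \<rho> = K}) * real n ^ K\<bar>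
        \<le> real (card S) * (a + 1) * real n ^ (K - 1)"
    unfolding split S1_def[symmetric] using u1 l1 u2 l2 A B C D
    by (simp add: algebra_simps abs_le_iff)
qed

lemma ratio_lim:
  fixes e :: "'a \<Rightarrow> nat"
  assumes fG: "finite G" and De: "\<forall>\<sigma>\<in>G. e \<sigma> \<le> D"
  shows "((\<lambda>n. real (\<Sum>\<sigma>\<in>G. n ^ e \<sigma>) / real n ^ D) \<longlongrightarrow> real (card {\<sigma>\<in>G. e \<sigma> = D})) sequentially"
proof -
  have each: "((\<lambda>n. real n ^ e \<sigma> / real n ^ D) \<longlongrightarrow> (if e \<sigma> = D then 1 else 0)) sequentially" if "\<sigma> \<in> G" for \<sigma>
  proof (cases "e \<sigma> = D")
    case True
    have "eventually (\<lambda>n. real n ^ e \<sigma> / real n ^ D = 1) sequentially"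
      using eventually_gt_at_top[of 0] by eventually_elim (use True in simp)
    then show ?thesis using True by (simp add: tendsto_eventually)
  next
    case False
    then have lt: "0 < D - e \<sigma>" using De that by fastforce
    have "eventually (\<lambda>n. inverse (real n ^ (D - e \<sigma>)) = real n ^ e \<sigma> / real n ^ D) sequentially"
      using eventually_gt_at_top[of 0]
    proof eventually_elim
      case (elim n)
      have "real n ^ D = real n ^ e \<sigma> * real n ^ (D - e \<sigma>)" using De that by (simp flip: power_add)
      then show ?case using elim by (simp add: field_simps)
    qed
    moreover have "((\<lambda>n. inverse (real n ^ (D - e \<sigma>))) \<longlongrightarrow> 0) sequentially"
      by (rule tendsto_inverse_0_at_top, rule filterlim_pow_at_top[OF lt filterlim_real_sequentially])
    ultimately show ?thesis using False tendsto_cong by fastforce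
  qed
  have "((\<lambda>n. \<Sum>\<sigma>\<in>G. real n ^ e \<sigma> / real n ^ D) \<longlongrightarrow> (\<Sum>\<sigma>\<in>G. if e \<sigma> = D then 1 else 0)) sequentially"
    by (rule tendsto_sum) (rule each)
  moreover have "(\<Sum>\<sigma>\<in>G. if e \<sigma> = D then 1 else 0 :: real) = real (card {\<sigma>\<in>G. e \<sigma> = D})"
    using fG by (simp add: sum.If_cases Int_def)
  moreover have "(\<Sum>\<sigma>\<in>G. real n ^ e \<sigma> / real n ^ D) = real (\<Sum>\<sigma>\<in>G. n ^ e \<sigma>) / real n ^ D" for n
    by (simp add: sum_divide_distrib)
  ultimately show ?thesis by simp
qed

lemma asym:
  fixes e :: "'a \<Rightarrow> nat" and B \<epsilon> :: real and K D c :: nat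
  assumes fG: "finite G" and Gne: "G \<noteq> {}" and D: "D = Max (e ` G)" and D1: "1 \<le> D"
    and KD: "K \<le> D" and B: "0 \<le> B" and eps: "0 < \<epsilon>"
  shows "\<exists>N0. \<forall>n\<ge>N0. \<forall>F::real. (K = 0 \<longrightarrow> F = real c) \<longrightarrow> (1 \<le> K \<longrightarrow> \<bar>F - real c * real n ^ K\<bar> \<le> B * real n ^ (K - 1)) \<longrightarrow>
     \<bar>F - real c / real (card {\<sigma>\<in>G. e \<sigma> = D}) powr (real K / real D) * real (\<Sum>\<sigma>\<in>G. n ^ e \<sigma>) powr (real K / real D)\<bar>
       \<le> \<epsilon> * real (\<Sum>\<sigma>\<in>G. n ^ e \<sigma>) powr (real K / real D)"
proof -
  define L where "L = real (card {\<sigma>\<in>G. e \<sigma> = D})"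
  define Q where "Q n = real (\<Sum>\<sigma>\<in>G. n ^ e \<sigma>)" for n
  define d where "d = real K / real D"
  define r where "r n = Q n / real n ^ D" for n
  have De: "\<forall>\<sigma>\<in>G. e \<sigma> \<le> D" unfolding D using fG by simp
  have "D \<in> e ` G" unfolding D using fG Gne by (intro Max_in) auto
  then obtain \<sigma>0 where s0: "\<sigma>0 \<in> G" "e \<sigma>0 = D" by auto
  have L1: "1 \<le> L"
  proof -
    have "finite {\<sigma>\<in>G. e \<sigma> = D}" using fG by simp
    moreover have "\<sigma>0 \<in> {\<sigma>\<in>G. e \<sigma> = D}" using s0 by simp
    ultimately have "0 < card {\<sigma>\<in>G. e \<sigma> = D}" by (auto simp: card_gt_0_iff)
    then show ?thesis unfolding L_def by simp
  qed
  have rlim: "(r \<longlongrightarrow> L) sequentially" unfolding r_def Q_def L_def using ratio_lim[OF fG De] .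
  have Qge: "real n ^ D \<le> Q n" for n
  proof -
    have "n ^ e \<sigma>0 \<le> (\<Sum>\<sigma>\<in>G. n ^ e \<sigma>)" using s0(1) fG by (intro member_le_sum) auto
    then show ?thesis unfolding Q_def using s0(2) by (metis of_nat_le_iff of_nat_power)
  qed
  have Qpow: "Q n powr d = r n powr d * real n ^ K" if n: "1 \<le> n" for n
  proof -
    have np: "0 < real n" using n by simp
    have "Q n = r n * real n ^ D" unfolding r_def using np by simp
    moreover have "0 \<le> r n" unfolding r_def Q_def of_nat_sum by (simp add: sum_nonneg)
    ultimately have "Q n powr d = r n powr d * (real n ^ D) powr d" by (simp add: powr_mult)
    also have "(real n ^ D) powr d = real n ^ K"
    proof -
      have "(real n ^ D) powr d = (real n powr real D) powr d" using powr_realpow[OF np] by simp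
      also have "\<dots> = real n powr (real D * d)" by (simp add: powr_powr)
      also have "real D * d = real K" unfolding d_def using D1 by simp
      finally show ?thesis using powr_realpow[OF np] by simp
    qed
    finally show ?thesis .
  qed
  show ?thesis
  proof (cases "K = 0")
    case True
    have "\<forall>n\<ge>1. \<forall>F::real. F = real c \<longrightarrow>
       \<bar>F - real c / L powr d * Q n powr d\<bar> \<le> \<epsilon> * Q n powr d"
    proof (intro allI impI)
      fix n :: nat and F :: real assume n: "1 \<le> n" and F: "F = real c"
      have "0 < Q n" using Qge[of n] n by (smt (verit) one_le_power of_nat_1 of_nat_le_iff)
      then show "\<bar>F - real c / L powr d * Q n powr d\<bar> \<le> \<epsilon> * Q n powr d"
        using F L1 True eps unfolding d_def by simp
    qed
    then show ?thesis unfolding L_def Q_def d_def using True by blast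
  next
    case False
    then have K1: "1 \<le> K" by simp
    define Ld where "Ld = L powr d"
    have Ldp: "0 < Ld" unfolding Ld_def using L1 by simp
    have rdlim: "((\<lambda>n. r n powr d) \<longlongrightarrow> Ld) sequentially"
      unfolding Ld_def by (rule tendsto_powr[OF rlim tendsto_const]) (use L1 in simp)
    define \<delta> where "\<delta> = min (Ld / 2) (\<epsilon> * Ld * Ld / 4 / (real c + 1))"
    have dp: "0 < \<delta>" unfolding \<delta>_def using Ldp eps by simp
    have ev1: "eventually (\<lambda>n. \<bar>r n powr d - Ld\<bar> < \<delta>) sequentially"
      using tendstoD[OF rdlim dp] by (simp add: dist_real_def)
    have ev2: "eventually (\<lambda>n. B / real n \<le> \<epsilon> * Ld / 4) sequentially"
    proof -
      have "((\<lambda>n. B / real n) \<longlongrightarrow> 0) sequentially"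
        by (rule tendsto_divide_0[OF tendsto_const]) (rule filterlim_at_top_imp_at_infinity[OF filterlim_real_sequentially])
      from tendstoD[OF this, of "\<epsilon> * Ld / 4"] have "eventually (\<lambda>n. \<bar>B / real n\<bar> < \<epsilon> * Ld / 4) sequentially"
        using eps Ldp by (simp add: dist_real_def)
      then show ?thesis by (rule eventually_mono) (use B in simp)

    qed
    from ev1 ev2 eventually_ge_at_top[of 1] have "eventually (\<lambda>n. \<bar>r n powr d - Ld\<bar> < \<delta> \<and> B / real n \<le> \<epsilon> * Ld / 4 \<and> 1 \<le> n) sequentially"
      by eventually_elim auto
    then obtain N0 where N0: "\<And>n. n \<ge> N0 \<Longrightarrow> \<bar>r n powr d - Ld\<bar> < \<delta> \<and> B / real n \<le> \<epsilon> * Ld / 4 \<and> 1 \<le> n"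
      unfolding eventually_sequentially by blast
    have main: "\<bar>F - real c / Ld * Q n powr d\<bar> \<le> \<epsilon> * Q n powr d"
      if n: "n \<ge> N0" and F: "\<bar>F - real c * real n ^ K\<bar> \<le> B * real n ^ (K - 1)" for n F
    proof -
      have n1: "1 \<le> n" and a1: "\<bar>r n powr d - Ld\<bar> < \<delta>" and a2: "B / real n \<le> \<epsilon> * Ld / 4" using N0[OF n] by auto
      define P where "P = real n ^ K"
      define R where "R = r n powr d"
      have Pp: "0 < P" unfolding P_def using n1 by simp
      have QP: "Q n powr d = R * P" unfolding R_def P_def using Qpow[OF n1] .
      have Rge: "Ld / 2 \<le> R" using a1 unfolding R_def \<delta>_def by linarith
      have Bn: "B * real n ^ (K - 1) = B / real n * P"
      proof -
        have "real n ^ K = real n * real n ^ (K - 1)" using K1 by (metis Suc_diff_le diff_Suc_1 power_Suc)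
        then show ?thesis unfolding P_def using n1 by (simp add: field_simps)
      qed
      have cR: "real c * \<bar>1 - R / Ld\<bar> \<le> \<epsilon> * Ld / 4"
      proof -
        have "real c * \<bar>1 - R / Ld\<bar> = real c * \<bar>Ld - R\<bar> / Ld" using Ldp by (simp add: field_simps abs_div)
        also have "\<dots> \<le> (real c + 1) * \<delta> / Ld"
          using a1 Ldp unfolding R_def by (intro divide_right_mono mult_mono) auto
        also have "\<dots> \<le> (real c + 1) * (\<epsilon> * Ld * Ld / 4 / (real c + 1)) / Ld"
          unfolding \<delta>_def using Ldp by (intro divide_right_mono mult_left_mono) auto
        also have "\<dots> = \<epsilon> * Ld * Ld / 4 / Ld"
        proof -
          have h: "real c + 1 \<noteq> 0" by (simp add: add_nonneg_eq_0_iff)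
          have "\<And>T. (real c + 1) * (T / (real c + 1)) = T" using h by simp
          then show ?thesis by presburger
        qed
        also have "\<dots> = \<epsilon> * Ld / 4" using Ldp by simp
        finally show ?thesis .
      qed
      have "\<bar>F - real c / Ld * Q n powr d\<bar> \<le> \<bar>F - real c * P\<bar> + \<bar>real c * P - real c / Ld * (R * P)\<bar>"
        unfolding QP using abs_triangle_ineq[of "F - real c * P" "real c * P - real c / Ld * (R * P)"] by simp
      also have "\<bar>real c * P - real c / Ld * (R * P)\<bar> = real c * \<bar>1 - R / Ld\<bar> * P"
      proof -
        have e: "real c * P - real c / Ld * (R * P) = real c * (1 - R / Ld) * P" by (simp add: algebra_simps)
        show ?thesis unfolding e using Pp by (simp add: abs_mult)
      qed
      also have "\<bar>F - real c * P\<bar> \<le> B / real n * P" using F Bn unfolding P_def by simp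
      finally have "\<bar>F - real c / Ld * Q n powr d\<bar> \<le> (B / real n + real c * \<bar>1 - R / Ld\<bar>) * P"
        by (simp add: algebra_simps)
      also have "\<dots> \<le> (\<epsilon> * Ld / 2) * P"
      proof -
        have "B / real n + real c * \<bar>1 - R / Ld\<bar> \<le> \<epsilon> * Ld / 2" using a2 cR by linarith
        then show ?thesis using Pp by (intro mult_right_mono) auto
      qed
      also have "\<dots> \<le> \<epsilon> * R * P" using Rge eps Pp by (intro mult_right_mono) auto
      finally show ?thesis unfolding QP by (simp add: algebra_simps)
    qed
    show ?thesis
    proof (intro exI[of _ N0] allI impI)
      fix n :: nat and F :: real assume n: "N0 \<le> n"
        and h: "1 \<le> K \<longrightarrow> \<bar>F - real c * real n ^ K\<bar> \<le> B * real n ^ (K - 1)"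
      have "\<bar>F - real c / Ld * Q n powr d\<bar> \<le> \<epsilon> * Q n powr d" using main[OF n] h K1 by blast
      then show "\<bar>F - real c / real (card {\<sigma> \<in> G. e \<sigma> = D}) powr (real K / real D) *
               real (\<Sum>\<sigma>\<in>G. n ^ e \<sigma>) powr (real K / real D)\<bar>
           \<le> \<epsilon> * real (\<Sum>\<sigma>\<in>G. n ^ e \<sigma>) powr (real K / real D)"
        unfolding Ld_def L_def Q_def d_def .
    qed
  qed
qed

fun bigAnd :: "fm list \<Rightarrow> fm" where
  "bigAnd [] = FNot FFalse"
| "bigAnd (p # ps) = FAnd p (bigAnd ps)"

lemma sat_bigAnd: "sat A e (bigAnd ps) \<longleftrightarrow> (\<forall>p\<in>set ps. sat A e p)"
  by (induction ps) auto

lemma fv_bigAnd: "fv (bigAnd ps) = (\<Union>p\<in>set ps. fv p)"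
  by (induction ps) auto

lemma lang_bigAnd: "in_lang G (bigAnd ps) \<longleftrightarrow> (\<forall>p\<in>set ps. in_lang G p)"
  by (induction ps) auto

definition pt :: "nat \<Rightarrow> tm" where "pt j = (if j = 0 then Root else Var j)"
definition mt :: "nat \<Rightarrow> tm" where "mt j = Meet (Var 0) (pt j)"

fun chi :: "nat \<Rightarrow> cls \<Rightarrow> fm" where
  "chi m (Orb \<sigma> j \<tau>) = FAnd (FP \<sigma> (Var 0)) (FAnd (FP \<tau> (mt j))
     (FAnd (bigAnd (map (\<lambda>j'. FLe (mt j') (mt j)) [0..<Suc m]))
       (FAnd (bigAnd (map (\<lambda>j'. FNot (FEq (mt j') (mt j))) [0..<j])) (FNot (FEq (Var 0) (mt j))))))"
| "chi m (Sng j \<tau>) = FAnd (FLe (Var 0) (pt j)) (FAnd (FP \<tau> (Var 0))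
     (bigAnd (map (\<lambda>j'. FNot (FLe (Var 0) (pt j'))) [0..<j])))"

lemma fv_pt: "fv_tm (pt j) \<subseteq> {j}" unfolding pt_def by auto
lemma fv_mt: "fv_tm (mt j) \<subseteq> {0, j}" unfolding mt_def using fv_pt by auto

lemma fv_chi: assumes "\<rho> \<in> Rset G m" shows "fv (chi m \<rho>) \<subseteq> {..m}"
proof (cases \<rho>)
  case (Orb \<sigma> j \<tau>)
  then have "j \<le> m" using assms unfolding Rset_def by auto
  then show ?thesis unfolding Orb by (auto simp: fv_bigAnd mt_def pt_def split: if_splits)
next
  case (Sng j \<tau>)
  then have "j \<le> m" using assms unfolding Rset_def by auto
  then show ?thesis unfolding Sng by (auto simp: fv_bigAnd mt_def pt_def split: if_splits)
qed

lemma lang_chi: "\<rho> \<in> Rset G m \<Longrightarrow> in_lang G (chi m \<rho>)"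
  unfolding Rset_def by (auto simp: lang_bigAnd)

lemma eval_pt: "j \<le> length b \<Longrightarrow> eval_tm (GS G lam X) (env (GS G lam X) x b) (pt j) = bb b j"
  unfolding pt_def bb_def env_def by (auto simp: GS_simps)

lemma eval_mt: "j \<le> length b \<Longrightarrow> eval_tm (GS G lam X) (env (GS G lam X) x b) (mt j) = lcp x (bb b j)"
  unfolding mt_def using eval_pt by (simp add: GS_simps env_def)

lemma env_0: "env A x b 0 = x" by (simp add: env_def)

lemma eval_x: "eval_tm (GS G lam X) (env (GS G lam X) x b) (Var 0) = x"
  by (simp add: env_def)

lemma sat_chi: assumes "\<rho> \<in> Rset G (length b)"
  shows "sat (GS G lam X) (env (GS G lam X) x b) (chi (length b) \<rho>) \<longleftrightarrow> inC b \<rho> x"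
proof (cases \<rho>)
  case (Orb \<sigma> j \<tau>)
  then have j: "j \<le> length b" using assms unfolding Rset_def by auto
  show ?thesis using j unfolding Orb
    by (auto simp: sat_bigAnd eval_mt eval_x GS_simps inO_def env_0 less_Suc_eq_le simp del: upt_Suc)
next
  case (Sng j \<tau>)
  then have j: "j \<le> length b" using assms unfolding Rset_def by auto
  show ?thesis using j unfolding Sng
    by (auto simp: sat_bigAnd eval_pt eval_x GS_simps inS_def env_0)
qed

lemma sat_bigAnd_map: "sat A e (bigAnd (map f xs)) \<longleftrightarrow> (\<forall>x\<in>set xs. sat A e (f x))"
  by (induction xs) auto

definition exf :: "nat \<Rightarrow> fm \<Rightarrow> cls \<Rightarrow> fm" where
  "exf m \<phi> \<rho> = FEx 0 (FAnd (chi m \<rho>) \<phi>)"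

definition theta :: "nat \<Rightarrow> fm \<Rightarrow> cls list \<Rightarrow> cls set \<Rightarrow> fm" where
  "theta m \<phi> R S = bigAnd (map (\<lambda>\<rho>. if \<rho> \<in> S then exf m \<phi> \<rho> else FNot (exf m \<phi> \<rho>)) R)"

lemma env_upd0: "(env A r b)(0 := a) = env A a b"
  by (auto simp: env_def fun_eq_iff)

lemma holds_theta:
  assumes t: "tree_plan G lam" and b: "set b \<subseteq> Gamma_set G lam X" and R: "set R = Rset G (length b)"
  shows "holds_y (GS G lam X) (theta (length b) \<phi> R S) b \<longleftrightarrow> (\<forall>\<rho>\<in>Rset G (length b). \<rho> \<in> S \<longleftrightarrow> \<rho> \<in> Sb G lam X \<phi> b)"
proof -
  have ex: "sat (GS G lam X) (env (GS G lam X) [] b) (exf (length b) \<phi> \<rho>) \<longleftrightarrow> \<rho> \<in> Sb G lam X \<phi> b"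
    if "\<rho> \<in> Rset G (length b)" for \<rho>
    using that sat_chi[OF that] unfolding exf_def Sb_def by (auto simp: GS_simps env_upd0)
  have ite: "sat M e (if c then p else FNot p) \<longleftrightarrow> (c \<longleftrightarrow> sat M e p)" for M e c p by simp
  have "holds_y (GS G lam X) (theta (length b) \<phi> R S) b \<longleftrightarrow>
    (\<forall>\<rho>\<in>set R. sat (GS G lam X) (env (GS G lam X) [] b) (if \<rho> \<in> S then exf (length b) \<phi> \<rho> else FNot (exf (length b) \<phi> \<rho>)))"
    unfolding holds_y_def theta_def sat_bigAnd_map GS_simps by (rule refl)
  also have "\<dots> \<longleftrightarrow> (\<forall>\<rho>\<in>Rset G (length b). \<rho> \<in> S \<longleftrightarrow> \<rho> \<in> Sb G lam X \<phi> b)"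
    unfolding ite R using ex by auto
  finally show ?thesis .
qed

lemma holds_theta_eq:
  assumes t: "tree_plan G lam" and b: "set b \<subseteq> Gamma_set G lam X" and R: "set R = Rset G (length b)"
    and S: "S \<subseteq> Rset G (length b)"
  shows "holds_y (GS G lam X) (theta (length b) \<phi> R S) b \<longleftrightarrow> S = Sb G lam X \<phi> b"
proof -
  have "Sb G lam X \<phi> b \<subseteq> Rset G (length b)" unfolding Sb_def by auto
  then show ?thesis unfolding holds_theta[OF t b R] using S by blast
qed

lemma fv_theta: assumes R: "set R = Rset G m" and f: "fv \<phi> \<subseteq> {..m}"
  shows "fv (theta m \<phi> R S) \<subseteq> {1..m}"
proof -
  have "fv (exf m \<phi> \<rho>) \<subseteq> {1..m}" if "\<rho> \<in> Rset G m" for \<rho>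
    using fv_chi[OF that] f unfolding exf_def by auto
  then show ?thesis unfolding theta_def using R by (auto simp: fv_bigAnd split: if_splits)
qed

lemma lang_theta: assumes R: "set R = Rset G m" and f: "in_lang G \<phi>"
  shows "in_lang G (theta m \<phi> R S)"
  unfolding theta_def exf_def using R f lang_chi by (auto simp: lang_bigAnd)

locale TR =
  fixes G :: "nat list set" and A :: "'a tstruct" and B :: "'b tstruct" and h
  assumes cA: "closed_st A" and hh: "hom_st G A B h"
begin

lemma bij: "bij_betw h (carrier A) (carrier B)" using hh unfolding hom_st_def by auto
lemma hroot: "h (root A) = root B" using hh unfolding hom_st_def by auto

lemma tuples_map: "b \<in> tuples A m \<Longrightarrow> map h b \<in> tuples B m"
  unfolding tuples_def using bij by (auto simp: bij_betw_def)

lemma env_ok: "a \<in> carrier A \<Longrightarrow> b \<in> tuples A m \<Longrightarrow> \<forall>v. env A a b v \<in> carrier A"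
  using cA unfolding closed_st_def tuples_def by (intro env_in) auto

lemma holds_tr: assumes "b \<in> tuples A m" "in_lang G \<theta>"
  shows "holds_y A \<theta> b \<longleftrightarrow> holds_y B \<theta> (map h b)"
proof -
  have r: "root A \<in> carrier A" using cA unfolding closed_st_def by auto
  show ?thesis unfolding holds_y_def
    using sat_hom[OF cA hh assms(2) env_ok[OF r assms(1)]] env_comp[of h A B, OF hroot] hroot by simp
qed

lemma card_def_tr: assumes "b \<in> tuples A m" "in_lang G \<phi>"
  shows "card (def_set A \<phi> b) = card (def_set B \<phi> (map h b))"
proof -
  have "h ` def_set A \<phi> b = def_set B \<phi> (map h b)"
  proof (intro equalityI subsetI)
    fix y assume "y \<in> h ` def_set A \<phi> b"
    then obtain a where a: "a \<in> carrier A" "sat A (env A a b) \<phi>" "y = h a" unfolding def_set_def by auto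
    have "sat B (env B (h a) (map h b)) \<phi>"
      using sat_hom[OF cA hh assms(2) env_ok[OF a(1) assms(1)]] a(2) env_comp[of h A B, OF hroot] by simp
    then show "y \<in> def_set B \<phi> (map h b)" using a bij unfolding def_set_def by (auto simp: bij_betw_def)
  next
    fix y assume "y \<in> def_set B \<phi> (map h b)"
    then have y: "y \<in> carrier B" "sat B (env B y (map h b)) \<phi>" unfolding def_set_def by auto
    obtain a where a: "a \<in> carrier A" "y = h a" using y(1) bij by (auto simp: bij_betw_def)
    have "sat A (env A a b) \<phi>"
      using sat_hom[OF cA hh assms(2) env_ok[OF a(1) assms(1)]] y(2) a(2) env_comp[of h A B, OF hroot] by simp
    then show "y \<in> h ` def_set A \<phi> b" using a unfolding def_set_def by auto
  qed
  moreover have "inj_on h (def_set A \<phi> b)" using bij unfolding bij_betw_def def_set_def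
    by (auto intro: inj_on_subset)
  ultimately show ?thesis using card_image by metis
qed

lemma card_tr: "card (carrier A) = card (carrier B)" using bij by (rule bij_betw_same_card)

end

lemma K_member: assumes "A \<in> K_class G lam"
  shows "\<exists>n h. 1 \<le> n \<and> finite (carrier A) \<and> TR G A (GS G lam {1..n}) h"
  using assms unfolding K_class_def iso_struct_alt TR_def by blast

lemma card_GS: "tree_plan G lam \<Longrightarrow> card (Gamma_set G lam {1..n}) = (\<Sum>\<sigma>\<in>G. n ^ infc_from lam 0 \<sigma>)"
  using Gamma_finite_card[of G lam "{1..n}"] by simp

lemma D_pos: assumes t: "tree_plan G lam" and ex: "\<exists>\<sigma>\<in>G. lam \<sigma> = Infty"
  shows "1 \<le> Max (infc_from lam 0 ` G)"
proof -
  obtain \<sigma> where s: "\<sigma> \<in> G" "lam \<sigma> = Infty" using ex by blast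
  have fG: "finite G" using t unfolding tree_plan_def by auto
  have "\<sigma> \<noteq> []" using s t unfolding tree_plan_def by auto
  then have "length \<sigma> \<in> {k. 0 < k \<and> k \<le> length \<sigma> \<and> lam (take k \<sigma>) = Infty}" using s by simp
  then have "1 \<le> infc_from lam 0 \<sigma>" unfolding infc_from_def
    by (metis (no_types, lifting) One_nat_def Suc_leI card_gt_0_iff empty_iff finite_nat_set_iff_bounded_le mem_Collect_eq)
  also have "\<dots> \<le> Max (infc_from lam 0 ` G)" using fG s by simp
  finally show ?thesis .
qed

lemma kk_le: assumes "tree_plan G lam" "\<rho> \<in> Rset G m"
  shows "kk lam \<rho> \<le> Max (infc_from lam 0 ` G)"
proof -
  have fG: "finite G" using assms unfolding tree_plan_def by auto
  show ?thesis
  proof (cases \<rho>)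
    case (Orb \<sigma> j \<tau>)
    then have "\<sigma> \<in> G" using assms unfolding Rset_def by auto
    then have "infc_from lam 0 \<sigma> \<le> Max (infc_from lam 0 ` G)" using fG by simp
    then show ?thesis using Orb infc_from_le[of lam "length \<tau>" \<sigma>] by simp
  qed simp
qed

lemma Qbound: fixes n :: nat assumes "finite G" "\<forall>\<sigma>\<in>G. e \<sigma> \<le> D" "1 \<le> n"
  shows "(\<Sum>\<sigma>\<in>G. n ^ e \<sigma>) \<le> card G * n ^ D"
proof -
  have "(\<Sum>\<sigma>\<in>G. n ^ e \<sigma>) \<le> (\<Sum>\<sigma>\<in>G. n ^ D)" using assms by (intro sum_mono power_increasing) auto
  then show ?thesis by simp
qed

lemma Qlow: fixes n :: nat assumes "finite G" "\<sigma> \<in> G" "e \<sigma> = D"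
  shows "n ^ D \<le> (\<Sum>\<sigma>\<in>G. n ^ e \<sigma>)"
  using member_le_sum[of \<sigma> G "\<lambda>\<sigma>. n ^ e \<sigma>"] assms by simp

lemma L_pos: assumes "finite G" "G \<noteq> {}" shows "1 \<le> card {\<sigma>\<in>G. e \<sigma> = Max (e ` G)}"
proof -
  have "Max (e ` G) \<in> e ` G" using assms by (intro Max_in) auto
  then obtain \<sigma>0 where "\<sigma>0 \<in> G" "e \<sigma>0 = Max (e ` G)" by auto
  then have "\<sigma>0 \<in> {\<sigma>\<in>G. e \<sigma> = Max (e ` G)}" by simp
  moreover have "finite {\<sigma>\<in>G. e \<sigma> = Max (e ` G)}" using assms by simp
  ultimately show ?thesis by (metis One_nat_def Suc_leI card_gt_0_iff empty_iff)
qed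

lemma part1:
  assumes t: "tree_plan G lam" and ex: "\<exists>\<sigma>\<in>G. lam \<sigma> = Infty"
  shows "asymptotic_class (in_lang G) (K_class G lam) (Max (infc_from lam 0 ` G))"
proof -
  define e where "e = infc_from lam 0"
  define D where "D = Max (e ` G)"
  have D1: "1 \<le> D" unfolding D_def e_def using D_pos[OF t ex] .
  have fG: "finite G" and nG: "[] \<in> G" using t unfolding tree_plan_def by auto
  have Gne: "G \<noteq> {}" using nG by auto
  define L where "L = card {\<sigma>\<in>G. e \<sigma> = D}"
  have L1: "1 \<le> L" unfolding L_def D_def using L_pos[OF fG Gne] .
  have eD: "\<forall>\<sigma>\<in>G. e \<sigma> \<le> D" unfolding D_def using fG by simp
  show ?thesis unfolding asymptotic_class_def D_def[symmetric] e_def[symmetric]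
  proof (intro conjI allI impI)
    show "0 < D" using D1 by simp
    fix \<phi> m assume a: "in_lang G \<phi> \<and> fv \<phi> \<subseteq> {..m}"
    obtain R where R: "set R = Rset G m" "distinct R" using finite_distinct_list[OF Rset_finite[OF fG]] by blast
    define SS where "SS = remdups (map set (subseqs R))"
    have SSset: "set SS = Pow (Rset G m)" unfolding SS_def using subseqs_powset[of R] R(1) by simp
    have SSd: "distinct SS" unfolding SS_def by simp
    define Kf where "Kf S = Max (insert 0 (kk lam ` S))" for S
    define cf where "cf S = card {\<rho>\<in>S. kk lam \<rho> = Kf S}" for S
    define T where "T = map (\<lambda>S. (real (Kf S) / real D, real (cf S) / real L powr (real (Kf S) / real D), theta m \<phi> R S)) SS"
    have lenT: "length T = length SS" unfolding T_def by simp
    have Ti: "T ! i = (real (Kf (SS ! i)) / real D, real (cf (SS ! i)) / real L powr (real (Kf (SS ! i)) / real D), theta m \<phi> R (SS ! i))"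
      if "i < length SS" for i unfolding T_def using that by simp
    have finS: "finite S" if "S \<in> set SS" for S
    proof -
      have "S \<subseteq> Rset G m" using that SSset by auto
      then show ?thesis using Rset_finite[OF fG, of m] finite_subset by blast
    qed
    have KfD: "Kf S \<le> D" if "S \<in> set SS" for S
    proof -
      have "\<forall>k\<in>insert 0 (kk lam ` S). k \<le> D"
        using that SSset kk_le[OF t] unfolding D_def e_def by auto
      then show ?thesis unfolding Kf_def using finS[OF that] by (simp add: Max_le_iff)
    qed
    have Kfge: "kk lam \<rho> \<le> Kf S" if "S \<in> set SS" "\<rho> \<in> S" for S \<rho>
      unfolding Kf_def using finS[OF that(1)] that(2) by (intro Max_ge) auto
    have cfpos: "1 \<le> cf S" if S1: "S \<in> set SS" and S2: "Kf S \<noteq> 0" for S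
    proof -
      have "Kf S \<in> insert 0 (kk lam ` S)" unfolding Kf_def using finS[OF S1] by (intro Max_in) auto
      then obtain \<rho> where "\<rho> \<in> S" "kk lam \<rho> = Kf S" using S2 by auto
      then have "\<rho> \<in> {\<rho>\<in>S. kk lam \<rho> = Kf S}" by simp
      moreover have "finite {\<rho>\<in>S. kk lam \<rho> = Kf S}" using finS[OF S1] by simp
      ultimately show ?thesis unfolding cf_def by (metis One_nat_def Suc_leI card_gt_0_iff empty_iff)
    qed
    show "\<exists>T :: (real \<times> real \<times> fm) list.
         (\<forall>(d, \<mu>, \<theta>) \<in> set T.
             (\<exists>j\<le>D. d = real j / real D) \<and> \<mu> \<ge> 0 \<and> (d \<noteq> 0 \<longrightarrow> \<mu> > 0) \<and>
             in_lang G \<theta> \<and> fv \<theta> \<subseteq> {1..m}) \<and>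
         (\<forall>A\<in>K_class G lam. \<forall>b\<in>tuples A m.
             (\<exists>i < length T. holds_y A (snd (snd (T ! i))) b) \<and>
             (\<forall>i < length T. \<forall>j < length T. i \<noteq> j \<longrightarrow>
                 \<not> (holds_y A (snd (snd (T ! i))) b \<and> holds_y A (snd (snd (T ! j))) b))) \<and>
         (\<forall>i < length T. \<forall>\<epsilon>::real. \<epsilon> > 0 \<longrightarrow>
            (\<exists>M::nat. \<forall>A\<in>K_class G lam. card (carrier A) \<ge> M \<longrightarrow>
               (\<forall>b\<in>tuples A m. holds_y A (snd (snd (T ! i))) b \<longrightarrow>
                  \<bar>real (card (def_set A \<phi> b)) - fst (snd (T ! i)) * real (card (carrier A)) powr fst (T ! i)\<bar>
                    \<le> \<epsilon> * real (card (carrier A)) powr fst (T ! i))))"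
    proof (rule exI[of _ T], intro conjI)
      show "\<forall>(d, \<mu>, \<theta>) \<in> set T.
             (\<exists>j\<le>D. d = real j / real D) \<and> \<mu> \<ge> 0 \<and> (d \<noteq> 0 \<longrightarrow> \<mu> > 0) \<and>
             in_lang G \<theta> \<and> fv \<theta> \<subseteq> {1..m}"
      proof
        fix x assume "x \<in> set T"
        then obtain S where S: "S \<in> set SS" and x: "x = (real (Kf S) / real D, real (cf S) / real L powr (real (Kf S) / real D), theta m \<phi> R S)"
          unfolding T_def by auto
        have c1: "\<exists>j\<le>D. real (Kf S) / real D = real j / real D" using KfD[OF S] by blast
        have c2: "real (Kf S) / real D \<noteq> 0 \<longrightarrow> 0 < real (cf S) / real L powr (real (Kf S) / real D)"
          using cfpos[OF S] L1 by auto
        show "case x of (d, \<mu>, \<theta>) \<Rightarrow> (\<exists>j\<le>D. d = real j / real D) \<and> \<mu> \<ge> 0 \<and> (d \<noteq> 0 \<longrightarrow> \<mu> > 0) \<and>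
             in_lang G \<theta> \<and> fv \<theta> \<subseteq> {1..m}"
          unfolding x using c1 c2 lang_theta[OF R(1)] fv_theta[OF R(1)] a by auto
      qed
    next
      show "\<forall>A\<in>K_class G lam. \<forall>b\<in>tuples A m.
             (\<exists>i < length T. holds_y A (snd (snd (T ! i))) b) \<and>
             (\<forall>i < length T. \<forall>j < length T. i \<noteq> j \<longrightarrow>
                 \<not> (holds_y A (snd (snd (T ! i))) b \<and> holds_y A (snd (snd (T ! j))) b))"
      proof (intro ballI)
        fix A b assume A: "A \<in> K_class G lam" and b: "b \<in> tuples A m"
        obtain n h where nh: "1 \<le> n" "TR G A (GS G lam {1..n}) h" using K_member[OF A] by blast
        interpret TR G A "GS G lam {1..n}" h by (rule nh(2))
        have b': "map h b \<in> tuples (GS G lam {1..n}) m" by (rule tuples_map[OF b])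
        then have lb: "length (map h b) = m" and sb: "set (map h b) \<subseteq> Gamma_set G lam {1..n}"
          unfolding tuples_def GS_simps by auto
        have hold: "holds_y A (snd (snd (T ! i))) b \<longleftrightarrow> SS ! i = Sb G lam {1..n} \<phi> (map h b)" if "i < length SS" for i
        proof -
          have "SS ! i \<in> set SS" using that by simp
          then have sub: "SS ! i \<subseteq> Rset G (length (map h b))" using SSset lb by auto
          have "holds_y A (snd (snd (T ! i))) b \<longleftrightarrow> holds_y (GS G lam {1..n}) (theta m \<phi> R (SS ! i)) (map h b)"
            using Ti[OF that] holds_tr[OF b lang_theta[OF R(1)]] a by simp
          also have "\<dots> \<longleftrightarrow> SS ! i = Sb G lam {1..n} \<phi> (map h b)"
            using holds_theta_eq[OF t sb _ sub] R(1) lb by simp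
          finally show ?thesis .
        qed
        have "Sb G lam {1..n} \<phi> (map h b) \<in> set SS" using SSset lb unfolding Sb_def by auto
        then obtain i where i: "i < length SS" "SS ! i = Sb G lam {1..n} \<phi> (map h b)" by (metis in_set_conv_nth)
        show "(\<exists>i < length T. holds_y A (snd (snd (T ! i))) b) \<and>
             (\<forall>i < length T. \<forall>j < length T. i \<noteq> j \<longrightarrow>
                 \<not> (holds_y A (snd (snd (T ! i))) b \<and> holds_y A (snd (snd (T ! j))) b))"
        proof (intro conjI allI impI)
          show "\<exists>i < length T. holds_y A (snd (snd (T ! i))) b" using i hold lenT by auto
          fix i j assume ij: "i < length T" "j < length T" "i \<noteq> j"
          show "\<not> (holds_y A (snd (snd (T ! i))) b \<and> holds_y A (snd (snd (T ! j))) b)"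
            using hold ij lenT SSd nth_eq_iff_index_eq by metis
        qed
      qed
    next
      show "\<forall>i < length T. \<forall>\<epsilon>::real. \<epsilon> > 0 \<longrightarrow>
            (\<exists>M::nat. \<forall>A\<in>K_class G lam. card (carrier A) \<ge> M \<longrightarrow>
               (\<forall>b\<in>tuples A m. holds_y A (snd (snd (T ! i))) b \<longrightarrow>
                  \<bar>real (card (def_set A \<phi> b)) - fst (snd (T ! i)) * real (card (carrier A)) powr fst (T ! i)\<bar>
                    \<le> \<epsilon> * real (card (carrier A)) powr fst (T ! i)))"
      proof (intro allI impI)
        fix i :: nat and \<epsilon> :: real assume i: "i < length T" and eps: "0 < \<epsilon>"
        define S where "S = SS ! i"
        have iS: "i < length SS" using i lenT by simp
        have S: "S \<in> set SS" unfolding S_def using iS by simp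
        define B where "B = real (card (Rset G m)) * (real m + 2)"
        obtain N0 where N0: "\<forall>n\<ge>N0. \<forall>F::real. (Kf S = 0 \<longrightarrow> F = real (cf S)) \<longrightarrow>
            (1 \<le> Kf S \<longrightarrow> \<bar>F - real (cf S) * real n ^ Kf S\<bar> \<le> B * real n ^ (Kf S - 1)) \<longrightarrow>
            \<bar>F - real (cf S) / real L powr (real (Kf S) / real D) * real (\<Sum>\<sigma>\<in>G. n ^ e \<sigma>) powr (real (Kf S) / real D)\<bar>
              \<le> \<epsilon> * real (\<Sum>\<sigma>\<in>G. n ^ e \<sigma>) powr (real (Kf S) / real D)"
          using asym[OF fG Gne D_def D1 KfD[OF S], of B \<epsilon> "cf S"] eps unfolding B_def L_def by auto
        define M where "M = card G * (max N0 1) ^ D"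
        show "\<exists>M::nat. \<forall>A\<in>K_class G lam. card (carrier A) \<ge> M \<longrightarrow>
               (\<forall>b\<in>tuples A m. holds_y A (snd (snd (T ! i))) b \<longrightarrow>
                  \<bar>real (card (def_set A \<phi> b)) - fst (snd (T ! i)) * real (card (carrier A)) powr fst (T ! i)\<bar>
                    \<le> \<epsilon> * real (card (carrier A)) powr fst (T ! i))"
        proof (rule exI[of _ M], intro ballI impI)
          fix A b assume A: "A \<in> K_class G lam" and cM: "M \<le> card (carrier A)" and b: "b \<in> tuples A m"
            and hy: "holds_y A (snd (snd (T ! i))) b"
          obtain n h where nh: "1 \<le> n" "TR G A (GS G lam {1..n}) h" using K_member[OF A] by blast
          interpret TR G A "GS G lam {1..n}" h by (rule nh(2))
          have b': "map h b \<in> tuples (GS G lam {1..n}) m" by (rule tuples_map[OF b])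
          then have lb: "length (map h b) = m" and sb: "set (map h b) \<subseteq> Gamma_set G lam {1..n}"
            unfolding tuples_def GS_simps by auto
          have cardA: "card (carrier A) = (\<Sum>\<sigma>\<in>G. n ^ e \<sigma>)"
            using card_tr card_GS[OF t, of n] unfolding GS_simps e_def by simp
          have nN0: "N0 \<le> n"
          proof (rule ccontr)
            assume "\<not> N0 \<le> n"
            then have "n < max N0 1" by simp
            then have "n ^ D < (max N0 1) ^ D" using D1 by (intro power_strict_mono) auto
            then have "card G * n ^ D < card G * (max N0 1) ^ D" using fG Gne by (simp add: card_gt_0_iff)
            moreover have "(\<Sum>\<sigma>\<in>G. n ^ e \<sigma>) \<le> card G * n ^ D" by (rule Qbound[OF fG eD nh(1)])
            ultimately show False using cM cardA unfolding M_def by linarith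
          qed
          have Sdef: "S = Sb G lam {1..n} \<phi> (map h b)"
          proof -
            have sub: "S \<subseteq> Rset G (length (map h b))" using S SSset lb by auto
            have "holds_y (GS G lam {1..n}) (theta m \<phi> R S) (map h b)"
              using hy Ti[OF iS] holds_tr[OF b lang_theta[OF R(1)]] a unfolding S_def by simp
            then show ?thesis using holds_theta_eq[OF t sb _ sub] R(1) lb by simp
          qed
          have cdef: "card (def_set A \<phi> b) = (\<Sum>\<rho>\<in>S. card (cset G lam {1..n} (map h b) \<rho>))"
            using card_def_tr[OF b] a def_set_card[OF t _ sb] Sdef by simp
          have SR: "S \<subseteq> Rset G (length (map h b))" using S SSset lb by auto
          note agg = aggregate[OF finS[OF S] nh(1), of "real (Suc m)" "\<lambda>\<rho>. card (cset G lam {1..n} (map h b) \<rho>)" "kk lam" "Kf S"]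
          have bnd: "\<And>\<rho>. \<rho> \<in> S \<Longrightarrow> card (cset G lam {1..n} (map h b) \<rho>) \<le> n ^ kk lam \<rho> \<and> 1 \<le> card (cset G lam {1..n} (map h b) \<rho>) \<and>
              (1 \<le> kk lam \<rho> \<longrightarrow> real n ^ kk lam \<rho> - real (Suc (length (map h b))) * real n ^ (kk lam \<rho> - 1) \<le> real (card (cset G lam {1..n} (map h b) \<rho>)))"
          proof -
            fix \<rho> assume r: "\<rho> \<in> S"
            have ne: "\<exists>x\<in>Gamma_set G lam {1..n}. inC (map h b) \<rho> x" using r unfolding Sdef Sb_def by auto
            show "?thesis \<rho>" by (rule bound_rho[OF t sb _ ne]) (use r SR in auto)
          qed
          have AG: "(Kf S = 0 \<longrightarrow> (\<Sum>\<rho>\<in>S. card (cset G lam {1..n} (map h b) \<rho>)) = cf S) \<and>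
              (1 \<le> Kf S \<longrightarrow> \<bar>real (\<Sum>\<rho>\<in>S. card (cset G lam {1..n} (map h b) \<rho>)) - real (cf S) * real n ^ Kf S\<bar>
                \<le> real (card S) * (real (Suc m) + 1) * real n ^ (Kf S - 1))"
            unfolding cf_def by (rule agg) (use bnd lb Kfge[OF S] in auto)
          have cS: "real (card S) * (real (Suc m) + 1) \<le> B"
          proof -
            have "card S \<le> card (Rset G m)" using SR lb Rset_finite[OF fG] by (simp add: card_mono)
            then have "real (card S) \<le> real (card (Rset G m))" by simp
            moreover have "real (Suc m) + 1 = real m + 2" by simp
            ultimately show ?thesis unfolding B_def by (metis mult_right_mono of_nat_0_le_iff add_nonneg_nonneg zero_le_numeral)
          qed
          have F2: "1 \<le> Kf S \<longrightarrow> \<bar>real (card (def_set A \<phi> b)) - real (cf S) * real n ^ Kf S\<bar> \<le> B * real n ^ (Kf S - 1)"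
          proof
            assume "1 \<le> Kf S"
            then have "\<bar>real (card (def_set A \<phi> b)) - real (cf S) * real n ^ Kf S\<bar> \<le> real (card S) * (real (Suc m) + 1) * real n ^ (Kf S - 1)"
              using AG cdef by simp
            also have "\<dots> \<le> B * real n ^ (Kf S - 1)" using cS by (intro mult_right_mono) auto
            finally show "\<bar>real (card (def_set A \<phi> b)) - real (cf S) * real n ^ Kf S\<bar> \<le> B * real n ^ (Kf S - 1)" .
          qed
          have F1: "Kf S = 0 \<longrightarrow> real (card (def_set A \<phi> b)) = real (cf S)" using AG cdef by simp
          note res = N0[rule_format, OF nN0 F1[rule_format] F2[rule_format]]
          show "\<bar>real (card (def_set A \<phi> b)) - fst (snd (T ! i)) * real (card (carrier A)) powr fst (T ! i)\<bar>
                    \<le> \<epsilon> * real (card (carrier A)) powr fst (T ! i)"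
            using res Ti[OF iS] cardA unfolding S_def by simp
        qed
      qed
    qed
  qed
qed

lemma sigma0: assumes t: "tree_plan G lam" and ex: "\<exists>\<sigma>\<in>G. lam \<sigma> = Infty"
  shows "\<exists>\<sigma>0\<in>G. infc_from lam 0 \<sigma>0 = 1"
proof -
  obtain \<sigma> where s: "\<sigma> \<in> G" "lam \<sigma> = Infty" using ex by blast
  have ne: "\<sigma> \<noteq> []" using s t unfolding tree_plan_def by auto
  have exk: "\<exists>k. 0 < k \<and> k \<le> length \<sigma> \<and> lam (take k \<sigma>) = Infty" using s ne by (intro exI[of _ "length \<sigma>"]) auto
  define k0 where "k0 = (LEAST k. 0 < k \<and> k \<le> length \<sigma> \<and> lam (take k \<sigma>) = Infty)"
  have k0: "0 < k0" "k0 \<le> length \<sigma>" "lam (take k0 \<sigma>) = Infty" using LeastI_ex[OF exk] unfolding k0_def by auto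
  have k0l: "\<not> (0 < k \<and> k \<le> length \<sigma> \<and> lam (take k \<sigma>) = Infty)" if "k < k0" for k
    using not_less_Least[OF that[unfolded k0_def]] unfolding k0_def by blast
  define \<sigma>0 where "\<sigma>0 = take k0 \<sigma>"
  have l0: "length \<sigma>0 = k0" unfolding \<sigma>0_def using k0 by simp
  have tk: "take k \<sigma>0 = take k \<sigma>" if "k \<le> k0" for k unfolding \<sigma>0_def using that by (simp add: min_def)
  have "{k. 0 < k \<and> k \<le> length \<sigma>0 \<and> lam (take k \<sigma>0) = Infty} = {k0}"
  proof (intro equalityI subsetI)
    fix k assume "k \<in> {k. 0 < k \<and> k \<le> length \<sigma>0 \<and> lam (take k \<sigma>0) = Infty}"
    then have k: "0 < k" "k \<le> k0" "lam (take k \<sigma>) = Infty" using l0 tk by auto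
    then show "k \<in> {k0}" using k0l[of k] k0 by (cases "k < k0") auto
  next
    fix k assume "k \<in> {k0}"
    then show "k \<in> {k. 0 < k \<and> k \<le> length \<sigma>0 \<and> lam (take k \<sigma>0) = Infty}"
      using k0 l0 unfolding \<sigma>0_def by auto
  qed
  then have "infc_from lam 0 \<sigma>0 = 1" unfolding infc_from_def by simp
  moreover have "\<sigma>0 \<in> G" unfolding \<sigma>0_def using tree_take[OF t s(1)] .
  ultimately show ?thesis by blast
qed

lemma GS_in_K: assumes t: "tree_plan G lam" and n: "1 \<le> n"
  shows "GS G lam {1..n} \<in> K_class G lam"
proof -
  have "finite (carrier (GS G lam {1..n}))" using Gamma_finite_card[OF t, of "{1..n}"] by (simp add: GS_simps)
  moreover have "closed_st (GS G lam {1..n})" by (rule GS_closed[OF t])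
  moreover have "hom_st G (GS G lam {1..n}) (GS G lam {1..n}) id" by (rule hom_id)
  ultimately show ?thesis unfolding K_class_def iso_struct_alt using n by blast
qed

lemma part2:
  assumes t: "tree_plan G lam" and ex: "\<exists>\<sigma>\<in>G. lam \<sigma> = Infty"
    and N: "0 < N" "N < Max (infc_from lam 0 ` G)"
  shows "\<not> asymptotic_class (in_lang G) (K_class G lam) N"
proof
  assume AC: "asymptotic_class (in_lang G) (K_class G lam) N"
  define e where "e = infc_from lam 0"
  define D where "D = Max (e ` G)"
  have D1: "1 \<le> D" unfolding D_def e_def using D_pos[OF t ex] .
  have ND: "N < D" using N unfolding D_def e_def by simp
  have fG: "finite G" and nG: "[] \<in> G" using t unfolding tree_plan_def by auto
  have Gne: "G \<noteq> {}" using nG by auto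
  have eD: "\<forall>\<sigma>\<in>G. e \<sigma> \<le> D" unfolding D_def using fG by simp
  obtain \<sigma>m where sm: "\<sigma>m \<in> G" "e \<sigma>m = D"
  proof -
    have "D \<in> e ` G" unfolding D_def using fG Gne by (intro Max_in) auto
    then show ?thesis using that by auto
  qed
  obtain \<sigma>0 where s0: "\<sigma>0 \<in> G" "infc_from lam 0 \<sigma>0 = 1" using sigma0[OF t ex] by blast
  define \<phi> where "\<phi> = FP \<sigma>0 (Var 0)"
  define An where "An n = GS G lam {1..n}" for n
  have AK: "An n \<in> K_class G lam" if "1 \<le> n" for n unfolding An_def using GS_in_K[OF t that] .
  have tup: "[] \<in> tuples (An n) 0" for n unfolding tuples_def by simp
  have cardA: "card (carrier (An n)) = (\<Sum>\<sigma>\<in>G. n ^ e \<sigma>)" for n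
    unfolding An_def GS_simps e_def using card_GS[OF t] by simp
  have Qge: "n ^ D \<le> card (carrier (An n))" for n unfolding cardA using Qlow[where e=e and D=D, OF fG sm] .
  have cdef: "card (def_set (An n) \<phi> []) = n" for n
  proof -
    have "def_set (An n) \<phi> [] = Sset G lam {1..n} \<sigma>0 []"
      unfolding def_set_def Sset_def \<phi>_def An_def by (auto simp: GS_simps env_0)
    then show ?thesis using Sset_count[OF t _ Gamma_nil[OF t] s0(1)] s0(2) by simp
  qed
  have lang: "in_lang G \<phi> \<and> fv \<phi> \<subseteq> {..0}" unfolding \<phi>_def using s0 by auto
  note H = AC[unfolded asymptotic_class_def, THEN conjunct2, rule_format, OF lang]
  then obtain T :: "(real \<times> real \<times> fm) list" where TT:
    "(\<forall>(d, \<mu>, \<theta>) \<in> set T. (\<exists>j\<le>N. d = real j / real N) \<and> \<mu> \<ge> 0 \<and> (d \<noteq> 0 \<longrightarrow> \<mu> > 0) \<and>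
             in_lang G \<theta> \<and> fv \<theta> \<subseteq> {1..0}) \<and>
         (\<forall>A\<in>K_class G lam. \<forall>b\<in>tuples A 0.
             (\<exists>i < length T. holds_y A (snd (snd (T ! i))) b) \<and>
             (\<forall>i < length T. \<forall>j < length T. i \<noteq> j \<longrightarrow>
                 \<not> (holds_y A (snd (snd (T ! i))) b \<and> holds_y A (snd (snd (T ! j))) b))) \<and>
         (\<forall>i < length T. \<forall>\<epsilon>::real. \<epsilon> > 0 \<longrightarrow>
            (\<exists>M::nat. \<forall>A\<in>K_class G lam. card (carrier A) \<ge> M \<longrightarrow>
               (\<forall>b\<in>tuples A 0. holds_y A (snd (snd (T ! i))) b \<longrightarrow>
                  \<bar>real (card (def_set A \<phi> b)) - fst (snd (T ! i)) * real (card (carrier A)) powr fst (T ! i)\<bar>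
                    \<le> \<epsilon> * real (card (carrier A)) powr fst (T ! i))))"
    by (rule exE)
  have T1: "\<forall>(d, \<mu>, \<theta>) \<in> set T. (\<exists>j\<le>N. d = real j / real N) \<and> \<mu> \<ge> 0 \<and> (d \<noteq> 0 \<longrightarrow> \<mu> > 0) \<and>
             in_lang G \<theta> \<and> fv \<theta> \<subseteq> {1..0}" using TT by (rule conjunct1)
  have T2: "\<forall>A\<in>K_class G lam. \<forall>b\<in>tuples A 0. (\<exists>i < length T. holds_y A (snd (snd (T ! i))) b)"
    using TT[THEN conjunct2, THEN conjunct1] by blast
  have T3: "\<forall>i < length T. \<forall>\<epsilon>::real. \<epsilon> > 0 \<longrightarrow>
            (\<exists>M::nat. \<forall>A\<in>K_class G lam. card (carrier A) \<ge> M \<longrightarrow>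
               (\<forall>b\<in>tuples A 0. holds_y A (snd (snd (T ! i))) b \<longrightarrow>
                  \<bar>real (card (def_set A \<phi> b)) - fst (snd (T ! i)) * real (card (carrier A)) powr fst (T ! i)\<bar>
                    \<le> \<epsilon> * real (card (carrier A)) powr fst (T ! i)))"
    using TT[THEN conjunct2, THEN conjunct2] .
  define g where "g n = (SOME i. i < length T \<and> holds_y (An n) (snd (snd (T ! i))) [])" for n
  have g: "g n < length T \<and> holds_y (An n) (snd (snd (T ! g n))) []" if "1 \<le> n" for n
    unfolding g_def by (rule someI_ex) (use T2 AK[OF that] tup in blast)
  have infA: "\<not> finite {n::nat. 1 \<le> n}"
  proof
    assume "finite {n::nat. 1 \<le> n}"
    then obtain m where "\<forall>n\<in>{n::nat. 1 \<le> n}. n \<le> m" by (auto simp: finite_nat_set_iff_bounded_le)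
    then have "Suc m \<le> m" by simp
    then show False by simp
  qed
  have "g ` {n. 1 \<le> n} \<subseteq> {..<length T}" using g by auto
  then have "finite (g ` {n. 1 \<le> n})" using finite_subset by blast
  then obtain n0 where n0: "1 \<le> n0" "\<not> finite {n\<in>{n. 1 \<le> n}. g n = g n0}"
    using pigeonhole_infinite[OF infA] by auto
  define I where "I = {n\<in>{n. 1 \<le> n}. g n = g n0}"
  define i0 where "i0 = g n0"
  have i0: "i0 < length T" using g[OF n0(1)] unfolding i0_def by simp
  have unb: "\<exists>n\<in>I. M \<le> n" for M using n0(2) unfolding I_def[symmetric]
    by (meson finite_nat_set_iff_bounded_le not_le less_imp_le)
  have holdI: "holds_y (An n) (snd (snd (T ! i0))) []" "1 \<le> n" if "n \<in> I" for n
  proof -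
    show n1: "1 \<le> n" using that unfolding I_def by auto
    have "g n = i0" using that unfolding I_def i0_def by auto
    then show "holds_y (An n) (snd (snd (T ! i0))) []" using g[OF n1] by simp
  qed
  obtain d \<mu> \<theta> where dm: "T ! i0 = (d, \<mu>, \<theta>)" by (metis prod_cases3)
  have "T ! i0 \<in> set T" using i0 by simp
  then have dmp: "(\<exists>j\<le>N. d = real j / real N) \<and> \<mu> \<ge> 0 \<and> (d \<noteq> 0 \<longrightarrow> \<mu> > 0)" using T1 dm by fastforce
  then obtain j where j: "j \<le> N" "d = real j / real N" by blast
  have key: "\<exists>M::nat. \<forall>n\<in>I. M \<le> n \<longrightarrow> \<bar>real n - \<mu> * real (card (carrier (An n))) powr d\<bar> \<le> \<epsilon> * real (card (carrier (An n))) powr d"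
    if eps: "0 < \<epsilon>" for \<epsilon>
  proof -
    obtain M where M: "\<forall>A\<in>K_class G lam. card (carrier A) \<ge> M \<longrightarrow>
               (\<forall>b\<in>tuples A 0. holds_y A (snd (snd (T ! i0))) b \<longrightarrow>
                  \<bar>real (card (def_set A \<phi> b)) - fst (snd (T ! i0)) * real (card (carrier A)) powr fst (T ! i0)\<bar>
                    \<le> \<epsilon> * real (card (carrier A)) powr fst (T ! i0))" using T3[rule_format, OF i0 eps] by (rule exE)
    show ?thesis
    proof (intro exI[of _ M] ballI impI)
      fix n assume n: "n \<in> I" "M \<le> n"
      have "n \<le> n ^ D" using holdI(2)[OF n(1)] D1 by (metis One_nat_def le_add1 le_add_diff_inverse power_increasing power_one_right)
      then have "M \<le> card (carrier (An n))" using n(2) Qge[of n] by linarith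
      then show "\<bar>real n - \<mu> * real (card (carrier (An n))) powr d\<bar> \<le> \<epsilon> * real (card (carrier (An n))) powr d"
        using M AK[OF holdI(2)[OF n(1)]] tup[of n] holdI(1)[OF n(1)] cdef[of n] dm by force
    qed
  qed
  have Qpos: "1 \<le> real (card (carrier (An n)))" if "1 \<le> n" for n
  proof -
    have "1 \<le> n ^ D" using that by simp
    then show ?thesis using Qge[of n] by linarith
  qed
  show False
  proof (cases "d = 0")
    case True
    obtain M where M: "\<forall>n\<in>I. M \<le> n \<longrightarrow> \<bar>real n - \<mu> * real (card (carrier (An n))) powr d\<bar> \<le> 1 * real (card (carrier (An n))) powr d"
      using key[of 1] by auto
    obtain n where n: "n \<in> I" "max M (nat \<lceil>\<mu>\<rceil> + 2) \<le> n" using unb by blast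
    have c0: "card (carrier (An n)) \<noteq> 0" using Qpos[OF holdI(2)[OF n(1)]] by auto
    have "M \<le> n" using n(2) by simp
    then have "\<bar>real n - \<mu> * real (card (carrier (An n))) powr d\<bar> \<le> 1 * real (card (carrier (An n))) powr d"
      using M n(1) by blast
    then have A1: "\<bar>real n - \<mu>\<bar> \<le> 1" using c0 True by simp
    have "\<mu> + 2 \<le> real n" using n(2) by linarith
    then show False using A1 by linarith
  next
    case False
    then have mu: "0 < \<mu>" and j1: "1 \<le> j" using dmp j by auto
    define s where "s = d * real D - 1"
    have sp: "0 < s"
    proof -
      have "real N < real D" using ND by simp
      also have "\<dots> \<le> real j * real D" using j1 mult_right_mono[of 1 "real j" "real D"] by simp
      finally have "real N < real j * real D" .
      then have "1 < real j * real D / real N" using N by simp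
      then show ?thesis unfolding s_def j(2) by simp
    qed
    obtain M where M: "\<forall>n\<in>I. M \<le> n \<longrightarrow> \<bar>real n - \<mu> * real (card (carrier (An n))) powr d\<bar> \<le> \<mu> / 2 * real (card (carrier (An n))) powr d"
      using key[of "\<mu> / 2"] mu by auto
    define W where "W = (2 / \<mu> + 1) powr (1 / s)"
    obtain n where n: "n \<in> I" "max M (nat \<lceil>W\<rceil>) \<le> n" using unb by blast
    have n1: "1 \<le> n" using holdI(2)[OF n(1)] .
    have np: "0 < real n" using n1 by simp
    have dnn: "0 \<le> d" using j by simp
    define Q where "Q = real (card (carrier (An n)))"
    have "\<bar>real n - \<mu> * Q powr d\<bar> \<le> \<mu> / 2 * Q powr d" using M n unfolding Q_def by auto
    then have A: "\<mu> / 2 * Q powr d \<le> real n" by linarith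
    have le1: "(real n ^ D) powr d \<le> Q powr d"
      using Qge[of n] dnn unfolding Q_def by (intro powr_mono2) (auto simp flip: of_nat_power)
    have eq1: "(real n ^ D) powr d = real n * real n powr s"
    proof -
      have "(real n ^ D) powr d = real n powr (real D * d)" using np by (simp add: powr_realpow[symmetric] powr_powr)
      also have "real D * d = 1 + s" unfolding s_def by simp
      also have "real n powr (1 + s) = real n * real n powr s" using np by (simp add: powr_add)
      finally show ?thesis .
    qed
    have "\<mu> / 2 * (real n ^ D) powr d \<le> \<mu> / 2 * Q powr d" using le1 mu by (intro mult_left_mono) auto
    then have "\<mu> / 2 * (real n * real n powr s) \<le> \<mu> / 2 * Q powr d" unfolding eq1 .
    then have B: "\<mu> / 2 * (real n * real n powr s) \<le> real n" using A by (rule order_trans)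
    have C: "real n powr s \<le> 2 / \<mu>"
    proof -
      have "real n * (\<mu> / 2 * real n powr s) \<le> real n * 1" using B by (simp add: algebra_simps)
      then have "\<mu> / 2 * real n powr s \<le> 1" using np by simp
      then show ?thesis using mu by (simp add: field_simps)
    qed
    have "W \<le> real n" using n(2) by linarith
    then have "W powr s \<le> real n powr s" using sp unfolding W_def by (intro powr_mono2) auto
    moreover have "W powr s = 2 / \<mu> + 1" unfolding W_def using sp mu by (simp add: powr_powr)
    ultimately show False using C by linarith
  qed
qed


theorem mainTheorem12:
  fixes G :: "nat list set" and lam :: "nat list \<Rightarrow> label"
  assumes "tree_plan G lam"
    and "\<exists>\<sigma>\<in>G. lam \<sigma> = Infty"
  shows "asymptotic_class (in_lang G) (K_class G lam) (degree (tpoly G lam)) \<and>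
         (\<forall>n::nat. 0 < n \<and> n < degree (tpoly G lam) \<longrightarrow>
            \<not> asymptotic_class (in_lang G) (K_class G lam) n)"
proof -
  have deg: "degree (tpoly G lam) = Max (infc_from lam 0 ` G)" by (rule degree_tpoly[OF assms(1)])
  show ?thesis unfolding deg using part1[OF assms] part2[OF assms] by blast
qed

end
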